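(* Let $n\ge 2$. There is no finite subset $Y\subseteq\mathbb{S}^{n-1}$ which is a spherical design of harmonic index $\{8,4\}$ and has \[|Y|=\frac{(n+1)(n+2)(n+5)(n+6)}{252},\] i.e. there exists no tight spherical design of harmonic index $\{8,4\}$ on $\mathbb{S}^{n-1}$.
   Context: $\mathbb{S}^{n-1}$ is the unit sphere in $\mathbb{R}^n$. For $T\subseteq\mathbb{N}$, a finite $Y\subseteq\mathbb{S}^{n-1}$ is a spherical design of harmonic index $T$ if $\sum_{\mathbf{x}\in Y}f(\mathbf{x})=0$ for every real homogeneous harmonic polynomial $f$ in $n$ variables whose degree lies in $T$. With $Q_{n,k}$ the Gegenbauer polynomials (orthogonal on $[-1,1]$ for the weight $(1-x^2)^{(n-3)/2}$, $Q_{n,k}(1)=\binom{n+k-1}{n-1}-\binom{n+k-3}{n-1}$), the polynomial $L(x)=Q_{n,8}(x)+f_4Q_{n,4}(x)$ with $f_4=\frac{(n+4)(n+5)(n+14)}{60(n+12)}$ has the form $a(x^2-\alpha^2)^2(x^2-\beta^2)^2-c_{n,T}$ with $a>0$, $\alpha^2,\beta^2=\frac{7(n+8)\pm2\sqrt{7(n+5)(n+8)}}{(n+8)(n+12)}$, and $c_{n,T}=\frac{n(n+1)(n+4)(n+5)(n+10)(n+14)}{160(n+8)(n+12)}$; it yields the lower bound $|Y|\ge b_{n,T}=\frac{(n+1)(n+2)(n+5)(n+6)}{252}$ for designs of harmonic index $\{8,4\}$, and a design attaining it is called tight. *)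

theory Defs
  imports "HOL-Analysis.Analysis"
begin

text \<open>Real homogeneous polynomials of degree k in the n = CARD('n) coordinates of
  real^'n, represented by a real coefficient function on exponent vectors
  (only exponents of total degree k are used).\<close>

definition exps :: "nat \<Rightarrow> ('n::finite \<Rightarrow> nat) set" where
  "exps k = {\<alpha>. (\<Sum>i\<in>UNIV. \<alpha> i) = k}"

definition hpoly_eval :: "nat \<Rightarrow> (('n::finite \<Rightarrow> nat) \<Rightarrow> real) \<Rightarrow> real^'n \<Rightarrow> real" where
  "hpoly_eval k c x = (\<Sum>\<alpha>\<in>exps k. c \<alpha> * (\<Prod>i\<in>UNIV. (x $ i) ^ (\<alpha> i)))"

text \<open>Harmonic: the Laplacian vanishes, i.e. every coefficient of the (degree k-2)
  Laplacian is zero.  The coefficient of x^beta in the Laplacian of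
  sum c(alpha) x^alpha is sum_i (beta_i+2)(beta_i+1) c(beta + 2 e_i).\<close>

definition harmonic_hpoly :: "nat \<Rightarrow> (('n::finite \<Rightarrow> nat) \<Rightarrow> real) \<Rightarrow> bool" where
  "harmonic_hpoly k c \<longleftrightarrow>
     (\<forall>\<beta>::'n \<Rightarrow> nat. (\<Sum>i\<in>UNIV. \<beta> i) + 2 = k \<longrightarrow>
        (\<Sum>i\<in>UNIV. real ((\<beta> i + 2) * (\<beta> i + 1)) * c (\<beta>(i := \<beta> i + 2))) = 0)"

definition harmonic_index_design :: "nat set \<Rightarrow> (real^'n::finite) set \<Rightarrow> bool" where
  "harmonic_index_design T Y \<longleftrightarrow>
     finite Y \<and> Y \<subseteq> sphere 0 1 \<and>
     (\<forall>k\<in>T. \<forall>c. harmonic_hpoly k c \<longrightarrow> (\<Sum>x\<in>Y. hpoly_eval k c x) = 0)"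

end

theory Submission
  imports Defs "HOL-Computational_Algebra.Primes" "HOL-Computational_Algebra.Nth_Powers"
begin


type_synonym 'n cf = "('n \<Rightarrow> nat) \<Rightarrow> real"

definition xm :: "'n \<Rightarrow> 'n cf \<Rightarrow> 'n cf" where
  "xm j c = (\<lambda>\<alpha>. if 0 < \<alpha> j then c (\<alpha>(j := \<alpha> j - 1)) else 0)"

definition dd :: "'n \<Rightarrow> 'n cf \<Rightarrow> 'n cf" where
  "dd j c = (\<lambda>\<beta>. real (\<beta> j + 1) * c (\<beta>(j := \<beta> j + 1)))"

lemma xm_add: "xm j (\<lambda>\<alpha>. f \<alpha> + g \<alpha>) = (\<lambda>\<alpha>. xm j f \<alpha> + xm j g \<alpha>)"
  by (auto simp: xm_def)
lemma xm_smul: "xm j (\<lambda>\<alpha>. a * f \<alpha>) = (\<lambda>\<alpha>. a * xm j f \<alpha>)"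
  by (auto simp: xm_def)
lemma xm_sum: "xm j (\<lambda>\<alpha>. \<Sum>k\<in>K. f k \<alpha>) = (\<lambda>\<alpha>. \<Sum>k\<in>K. xm j (f k) \<alpha>)"
  by (auto simp: xm_def)
lemma xm_zero: "xm j (\<lambda>\<alpha>. 0) = (\<lambda>\<alpha>. 0)"
  by (auto simp: xm_def)
lemma dd_add: "dd j (\<lambda>\<alpha>. f \<alpha> + g \<alpha>) = (\<lambda>\<alpha>. dd j f \<alpha> + dd j g \<alpha>)"
  by (auto simp: dd_def algebra_simps)
lemma dd_smul: "dd j (\<lambda>\<alpha>. a * f \<alpha>) = (\<lambda>\<alpha>. a * dd j f \<alpha>)"
  by (auto simp: dd_def algebra_simps)
lemma dd_sum: "dd j (\<lambda>\<alpha>. \<Sum>k\<in>K. f k \<alpha>) = (\<lambda>\<alpha>. \<Sum>k\<in>K. dd j (f k) \<alpha>)"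
  by (auto simp: dd_def sum_distrib_left)
lemma dd_zero: "dd j (\<lambda>\<alpha>. 0) = (\<lambda>\<alpha>. 0)"
  by (auto simp: dd_def)

lemma comm1: "dd j (xm l c) \<beta> = (if j = l then c \<beta> else 0) + xm l (dd j c) \<beta>"
proof (cases "j = l")
  case True
  show ?thesis
  proof (cases "\<beta> j = 0")
    case z: True
    then show ?thesis using True by (simp add: xm_def dd_def)
  next
    case False
    then obtain m where m: "\<beta> j = Suc m" by (cases "\<beta> j") auto
    have e1: "\<beta>(j := Suc m) = \<beta>" using m by auto
    show ?thesis using True m e1 by (simp add: xm_def dd_def algebra_simps)
  qed
next
  case False
  then show ?thesis
    by (simp add: xm_def dd_def fun_upd_twist)
qed

lemma xm_comm: "xm i (xm l c) = xm l (xm i c)"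
  by (cases "i = l") (auto simp: xm_def fun_upd_twist fun_eq_iff)

definition Tm :: "real^'n \<Rightarrow> 'n::finite cf \<Rightarrow> 'n cf" where
  "Tm y c = (\<lambda>\<alpha>. \<Sum>i\<in>UNIV. y$i * xm i c \<alpha>)"
definition Rm :: "'n::finite cf \<Rightarrow> 'n cf" where
  "Rm c = (\<lambda>\<alpha>. \<Sum>i\<in>UNIV. xm i (xm i c) \<alpha>)"
definition Dy :: "real^'n \<Rightarrow> 'n::finite cf \<Rightarrow> 'n cf" where
  "Dy y c = (\<lambda>\<beta>. \<Sum>i\<in>UNIV. y$i * dd i c \<beta>)"
definition lap :: "'n::finite cf \<Rightarrow> 'n cf" where
  "lap c = (\<lambda>\<beta>. \<Sum>i\<in>UNIV. dd i (dd i c) \<beta>)"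
definition Eu :: "'n::finite cf \<Rightarrow> 'n cf" where
  "Eu c = (\<lambda>\<alpha>. real (\<Sum>i\<in>UNIV. \<alpha> i) * c \<alpha>)"
definition one :: "'n cf" where
  "one = (\<lambda>\<alpha>. if \<alpha> = (\<lambda>_. 0) then 1 else 0)"

lemma Tm_add: "Tm y (\<lambda>\<alpha>. f \<alpha> + g \<alpha>) = (\<lambda>\<alpha>. Tm y f \<alpha> + Tm y g \<alpha>)"
  by (simp add: Tm_def xm_add algebra_simps sum.distrib)
lemma Tm_smul: "Tm y (\<lambda>\<alpha>. a * f \<alpha>) = (\<lambda>\<alpha>. a * Tm y f \<alpha>)"
  by (simp add: Tm_def xm_smul algebra_simps sum_distrib_left)
lemma Tm_sum: "Tm y (\<lambda>\<alpha>. \<Sum>k\<in>K. f k \<alpha>) = (\<lambda>\<alpha>. \<Sum>k\<in>K. Tm y (f k) \<alpha>)"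
  by (simp add: Tm_def xm_sum sum_distrib_left sum.swap[of _ UNIV K])
lemma Rm_add: "Rm (\<lambda>\<alpha>. f \<alpha> + g \<alpha>) = (\<lambda>\<alpha>. Rm f \<alpha> + Rm g \<alpha>)"
  by (simp add: Rm_def xm_add algebra_simps sum.distrib)
lemma Rm_smul: "Rm (\<lambda>\<alpha>. a * f \<alpha>) = (\<lambda>\<alpha>. a * Rm f \<alpha>)"
  by (simp add: Rm_def xm_smul algebra_simps sum_distrib_left)
lemma Rm_sum: "Rm (\<lambda>\<alpha>. \<Sum>k\<in>K. f k \<alpha>) = (\<lambda>\<alpha>. \<Sum>k\<in>K. Rm (f k) \<alpha>)"
  by (simp add: Rm_def xm_sum sum.swap[of _ UNIV K])
lemma lap_add: "lap (\<lambda>\<alpha>. f \<alpha> + g \<alpha>) = (\<lambda>\<alpha>. lap f \<alpha> + lap g \<alpha>)"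
  by (simp add: lap_def dd_add algebra_simps sum.distrib)
lemma lap_smul: "lap (\<lambda>\<alpha>. a * f \<alpha>) = (\<lambda>\<alpha>. a * lap f \<alpha>)"
  by (simp add: lap_def dd_smul algebra_simps sum_distrib_left)
lemma Dy_add: "Dy y (\<lambda>\<alpha>. f \<alpha> + g \<alpha>) = (\<lambda>\<alpha>. Dy y f \<alpha> + Dy y g \<alpha>)"
  by (simp add: Dy_def dd_add algebra_simps sum.distrib)
lemma Dy_smul: "Dy y (\<lambda>\<alpha>. a * f \<alpha>) = (\<lambda>\<alpha>. a * Dy y f \<alpha>)"
  by (simp add: Dy_def dd_smul algebra_simps sum_distrib_left)
lemma Eu_add: "Eu (\<lambda>\<alpha>. f \<alpha> + g \<alpha>) = (\<lambda>\<alpha>. Eu f \<alpha> + Eu g \<alpha>)"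
  by (simp add: Eu_def algebra_simps)
lemma Eu_smul: "Eu (\<lambda>\<alpha>. a * f \<alpha>) = (\<lambda>\<alpha>. a * Eu f \<alpha>)"
  by (simp add: Eu_def algebra_simps)
lemma Tm_zero: "Tm y (\<lambda>\<alpha>. 0) = (\<lambda>\<alpha>. 0)" by (simp add: Tm_def xm_zero)
lemma Rm_zero: "Rm (\<lambda>\<alpha>. 0) = (\<lambda>\<alpha>. 0)" by (simp add: Rm_def xm_zero)
lemma Dy_zero: "Dy y (\<lambda>\<alpha>. 0) = (\<lambda>\<alpha>. 0)" by (simp add: Dy_def dd_zero)
lemma lap_zero: "lap (\<lambda>\<alpha>. 0) = (\<lambda>\<alpha>. 0)" by (simp add: lap_def dd_zero)

lemma dd_Tm: "dd i (Tm y c) \<beta> = y$i * c \<beta> + Tm y (dd i c) \<beta>"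
proof -
  have "dd i (Tm y c) \<beta> = (\<Sum>l\<in>UNIV. y$l * dd i (xm l c) \<beta>)"
    unfolding Tm_def by (simp add: dd_sum dd_smul)
  also have "\<dots> = (\<Sum>l\<in>UNIV. y$l * (if i = l then c \<beta> else 0)) + (\<Sum>l\<in>UNIV. y$l * xm l (dd i c) \<beta>)"
    by (simp add: comm1 algebra_simps sum.distrib)
  also have "\<dots> = y$i * c \<beta> + Tm y (dd i c) \<beta>"
    by (simp add: Tm_def if_distrib[of "(*) _"] cong: if_cong)
  finally show ?thesis .
qed

lemma dd_Rm: "dd i (Rm c) \<beta> = 2 * xm i c \<beta> + Rm (dd i c) \<beta>"
proof -
  have a: "xm l (dd i (xm l c)) = (\<lambda>\<beta>. (if i = l then xm l c \<beta> else 0) + xm l (xm l (dd i c)) \<beta>)" for l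
  proof -
    have "dd i (xm l c) = (\<lambda>\<beta>. (if i = l then c \<beta> else 0) + xm l (dd i c) \<beta>)"
      by (simp add: comm1 fun_eq_iff)
    then show ?thesis by (cases "i = l") (simp_all add: xm_add xm_zero)
  qed
  have "dd i (Rm c) \<beta> = (\<Sum>l\<in>UNIV. dd i (xm l (xm l c)) \<beta>)"
    unfolding Rm_def by (simp add: dd_sum)
  also have "\<dots> = (\<Sum>l\<in>UNIV. (if i = l then xm l c \<beta> else 0) + xm l (dd i (xm l c)) \<beta>)"
    by (simp add: comm1)
  also have "\<dots> = (\<Sum>l\<in>UNIV. (if i = l then 2 * xm l c \<beta> else 0) + xm l (xm l (dd i c)) \<beta>)"
    by (intro sum.cong) (auto simp: a)
  also have "\<dots> = 2 * xm i c \<beta> + Rm (dd i c) \<beta>"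
    by (simp add: sum.distrib Rm_def)
  finally show ?thesis .
qed

lemma xm_dd_same: "xm i (dd i c) \<beta> = real (\<beta> i) * c \<beta>"
proof (cases "\<beta> i")
  case 0 then show ?thesis by (simp add: xm_def)
next
  case (Suc m)
  then have "\<beta>(i := Suc m) = \<beta>" by auto
  then show ?thesis using Suc by (simp add: xm_def dd_def)
qed

lemma Eu_sumx: "(\<Sum>i\<in>UNIV. xm i (dd i c) \<beta>) = Eu c \<beta>"
  by (simp add: xm_dd_same Eu_def sum_distrib_right)

lemma Tm_fun: "(\<lambda>\<beta>. Tm y c \<beta>) = Tm y c" by simp

lemma lap_Tm: "lap (Tm y c) = (\<lambda>\<beta>. 2 * Dy y c \<beta> + Tm y (lap c) \<beta>)"
proof -
  have a: "dd i (Tm y c) = (\<lambda>\<beta>. y$i * c \<beta> + Tm y (dd i c) \<beta>)" for i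
    by (simp add: dd_Tm fun_eq_iff)
  have b: "dd i (dd i (Tm y c)) \<beta> = 2 * (y$i * dd i c \<beta>) + Tm y (dd i (dd i c)) \<beta>" for i \<beta>
    by (simp add: a dd_add dd_smul dd_Tm)
  have c: "(\<Sum>i\<in>UNIV. Tm y (dd i (dd i c)) \<beta>) = Tm y (lap c) \<beta>" for \<beta>
    by (simp add: lap_def Tm_sum)
  show ?thesis
    by (simp add: lap_def b sum.distrib Dy_def sum_distrib_left fun_eq_iff c)
qed

lemma lap_Rm: "lap (Rm c) = (\<lambda>\<beta>. 2 * real CARD('n) * c \<beta> + 4 * Eu c \<beta> + Rm (lap c) \<beta>)"
  for c :: "'n::finite cf"
proof -
  have a: "dd i (Rm c) = (\<lambda>\<beta>. 2 * xm i c \<beta> + Rm (dd i c) \<beta>)" for i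
    by (simp add: dd_Rm fun_eq_iff)
  have b: "dd i (dd i (Rm c)) \<beta> = 2 * c \<beta> + 4 * xm i (dd i c) \<beta> + Rm (dd i (dd i c)) \<beta>" for i \<beta>
    by (simp add: a dd_add dd_smul dd_Rm comm1)
  have c: "(\<Sum>i\<in>UNIV. Rm (dd i (dd i c)) \<beta>) = Rm (lap c) \<beta>" for \<beta>
    by (simp add: lap_def Rm_sum)
  have d: "(\<Sum>i\<in>UNIV. 4 * xm i (dd i c) \<beta>) = 4 * Eu c \<beta>" for \<beta>
    by (simp add: sum_distrib_left[symmetric] Eu_sumx)
  show ?thesis
    by (simp add: lap_def b sum.distrib fun_eq_iff c d)
qed

lemma Dy_Tm:
  assumes "(\<Sum>i\<in>UNIV. y$i * y$i) = 1"
  shows "Dy y (Tm y c) = (\<lambda>\<beta>. c \<beta> + Tm y (Dy y c) \<beta>)"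
proof -
  have "Dy y (Tm y c) \<beta> = c \<beta> + Tm y (Dy y c) \<beta>" for \<beta>
  proof -
    have "Dy y (Tm y c) \<beta> = (\<Sum>i\<in>UNIV. y$i * (y$i * c \<beta> + Tm y (dd i c) \<beta>))"
      by (simp add: Dy_def dd_Tm)
    also have "\<dots> = (\<Sum>i\<in>UNIV. y$i * y$i) * c \<beta> + (\<Sum>i\<in>UNIV. y$i * Tm y (dd i c) \<beta>)"
      by (simp add: algebra_simps sum.distrib sum_distrib_right sum_distrib_left)
    also have "(\<Sum>i\<in>UNIV. y$i * Tm y (dd i c) \<beta>) = Tm y (Dy y c) \<beta>"
      unfolding Dy_def by (simp add: Tm_sum Tm_smul)
    finally show ?thesis using assms by simp
  qed
  then show ?thesis by (simp add: fun_eq_iff)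
qed

lemma Dy_Rm: "Dy y (Rm c) = (\<lambda>\<beta>. 2 * Tm y c \<beta> + Rm (Dy y c) \<beta>)"
proof -
  have "Dy y (Rm c) \<beta> = 2 * Tm y c \<beta> + Rm (Dy y c) \<beta>" for \<beta>
  proof -
    have "Dy y (Rm c) \<beta> = (\<Sum>i\<in>UNIV. y$i * (2 * xm i c \<beta> + Rm (dd i c) \<beta>))"
      by (simp add: Dy_def dd_Rm)
    also have "\<dots> = 2 * Tm y c \<beta> + (\<Sum>i\<in>UNIV. y$i * Rm (dd i c) \<beta>)"
      by (simp add: algebra_simps sum.distrib sum_distrib_left Tm_def)
    also have "(\<Sum>i\<in>UNIV. y$i * Rm (dd i c) \<beta>) = Rm (Dy y c) \<beta>"
      unfolding Dy_def by (simp add: Rm_sum Rm_smul)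
    finally show ?thesis .
  qed
  then show ?thesis by (simp add: fun_eq_iff)
qed

lemma sum_upd_nat:
  fixes \<alpha> :: "'n::finite \<Rightarrow> nat"
  shows "(\<Sum>i\<in>UNIV. (\<alpha>(j := v)) i) + \<alpha> j = (\<Sum>i\<in>UNIV. \<alpha> i) + v"
proof -
  have "(\<Sum>i\<in>UNIV. (\<alpha>(j := v)) i) = v + (\<Sum>i\<in>UNIV - {j}. \<alpha> i)"
    by (simp add: sum.remove[of UNIV j])
  moreover have "(\<Sum>i\<in>UNIV. \<alpha> i) = \<alpha> j + (\<Sum>i\<in>UNIV - {j}. \<alpha> i)"
    by (simp add: sum.remove[of UNIV j])
  ultimately show ?thesis by simp
qed

lemma prod_upd:
  fixes \<beta> :: "'n::finite \<Rightarrow> nat" and x :: "real^'n"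
  shows "(\<Prod>i\<in>UNIV. x$i ^ (\<beta>(j := \<beta> j + 1)) i) = x$j * (\<Prod>i\<in>UNIV. x$i ^ \<beta> i)"
proof -
  have "(\<Prod>i\<in>UNIV. x$i ^ (\<beta>(j := \<beta> j + 1)) i) = x$j ^ (\<beta> j + 1) * (\<Prod>i\<in>UNIV - {j}. x$i ^ \<beta> i)"
    by (simp add: prod.remove[of UNIV j])
  moreover have "(\<Prod>i\<in>UNIV. x$i ^ \<beta> i) = x$j ^ \<beta> j * (\<Prod>i\<in>UNIV - {j}. x$i ^ \<beta> i)"
    by (simp add: prod.remove[of UNIV j])
  ultimately show ?thesis by simp
qed

lemma Eu_xm: "Eu (xm j c) = (\<lambda>\<alpha>. xm j c \<alpha> + xm j (Eu c) \<alpha>)"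
proof (rule ext)
  fix \<alpha> :: "'a \<Rightarrow> nat"
  show "Eu (xm j c) \<alpha> = xm j c \<alpha> + xm j (Eu c) \<alpha>"
  proof (cases "0 < \<alpha> j")
    case True
    have "(\<Sum>i\<in>UNIV. (\<alpha>(j := \<alpha> j - 1)) i) + \<alpha> j = (\<Sum>i\<in>UNIV. \<alpha> i) + (\<alpha> j - 1)"
      by (rule sum_upd_nat)
    then have "real (\<Sum>i\<in>UNIV. \<alpha> i) = real (\<Sum>i\<in>UNIV. (\<alpha>(j := \<alpha> j - 1)) i) + 1"
      using True by linarith
    then show ?thesis using True by (simp add: Eu_def xm_def algebra_simps)
  next
    case False then show ?thesis by (simp add: Eu_def xm_def)
  qed
qed

lemma Eu_sum: "Eu (\<lambda>\<alpha>. \<Sum>k\<in>K. f k \<alpha>) = (\<lambda>\<alpha>. \<Sum>k\<in>K. Eu (f k) \<alpha>)"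
  by (simp add: Eu_def sum_distrib_left)

lemma Eu_Tm: "Eu (Tm y c) = (\<lambda>\<alpha>. Tm y c \<alpha> + Tm y (Eu c) \<alpha>)"
  unfolding Tm_def by (simp add: Eu_sum Eu_smul Eu_xm algebra_simps sum.distrib)

lemma Eu_Rm: "Eu (Rm c) = (\<lambda>\<alpha>. 2 * Rm c \<alpha> + Rm (Eu c) \<alpha>)"
  unfolding Rm_def by (simp add: Eu_sum Eu_xm xm_add algebra_simps sum.distrib sum_distrib_left)

lemma Tm_Rm: "Tm y (Rm c) = Rm (Tm y c)"
proof -
  have cm: "xm i (xm l (xm l c)) = xm l (xm l (xm i c))" for i l
  proof -
    have "xm i (xm l (xm l c)) = xm l (xm i (xm l c))" by (rule xm_comm)
    also have "xm i (xm l c) = xm l (xm i c)" by (rule xm_comm)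
    finally show ?thesis .
  qed
  have "Tm y (Rm c) \<alpha> = Rm (Tm y c) \<alpha>" for \<alpha>
  proof -
    have "Tm y (Rm c) \<alpha> = (\<Sum>i\<in>UNIV. \<Sum>l\<in>UNIV. y$i * xm i (xm l (xm l c)) \<alpha>)"
      unfolding Rm_def Tm_def by (simp add: xm_sum sum_distrib_left)
    also have "\<dots> = (\<Sum>l\<in>UNIV. \<Sum>i\<in>UNIV. y$i * xm l (xm l (xm i c)) \<alpha>)"
      by (subst sum.swap) (simp only: cm)
    also have "\<dots> = Rm (Tm y c) \<alpha>"
      unfolding Rm_def Tm_def by (simp add: xm_sum xm_smul)
    finally show ?thesis .
  qed
  then show ?thesis by (simp add: fun_eq_iff)
qed

lemma Eu_one: "Eu one = (\<lambda>\<alpha>. 0)"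
  by (auto simp: Eu_def one_def fun_eq_iff)
lemma dd_one: "dd i one = (\<lambda>\<alpha>. 0)"
proof -
  have "\<beta>(i := Suc (\<beta> i)) \<noteq> (\<lambda>_. 0)" for \<beta> :: "'a \<Rightarrow> nat"
    by (metis fun_upd_same nat.distinct(1))
  then show ?thesis by (auto simp: dd_def one_def fun_eq_iff)
qed
lemma Dy_one: "Dy y one = (\<lambda>\<alpha>. 0)" by (simp add: Dy_def dd_one)
lemma lap_one: "lap one = (\<lambda>\<alpha>. 0)" by (simp add: lap_def dd_one dd_zero)

definition RB :: "nat \<Rightarrow> 'n::finite cf" where "RB b = (Rm ^^ b) one"
definition TP :: "real^'n \<Rightarrow> nat \<Rightarrow> 'n::finite cf \<Rightarrow> 'n cf" where "TP y a c = (Tm y ^^ a) c"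
definition MM :: "real^'n \<Rightarrow> nat \<Rightarrow> nat \<Rightarrow> 'n::finite cf" where "MM y a b = TP y a (RB b)"

lemma RB_Suc: "RB (Suc b) = Rm (RB b)" by (simp add: RB_def)
lemma TP_Suc: "TP y (Suc a) c = Tm y (TP y a c)" by (simp add: TP_def)
lemma TP_0: "TP y 0 c = c" by (simp add: TP_def)
lemma TP_Suc': "TP y (Suc a) c = TP y a (Tm y c)" by (simp add: TP_def funpow_swap1)

lemma TP_add: "TP y a (\<lambda>\<beta>. f \<beta> + g \<beta>) = (\<lambda>\<beta>. TP y a f \<beta> + TP y a g \<beta>)"
  by (induction a) (simp_all add: TP_0 TP_Suc Tm_add)
lemma TP_smul: "TP y a (\<lambda>\<beta>. k * f \<beta>) = (\<lambda>\<beta>. k * TP y a f \<beta>)"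
  by (induction a) (simp_all add: TP_0 TP_Suc Tm_smul)

lemma Eu_RB: "Eu (RB b) = (\<lambda>\<alpha>. real (2*b) * RB b \<alpha>)"
proof (induction b)
  case 0 then show ?case by (simp add: RB_def Eu_one)
next
  case (Suc b)
  show ?case by (simp add: RB_Suc Eu_Rm Suc Rm_smul algebra_simps)
qed

lemma Dy_RB: "Dy y (RB b) = (\<lambda>\<alpha>. real (2*b) * Tm y (RB (b-1)) \<alpha>)"
proof (induction b)
  case 0 then show ?case by (simp add: RB_def Dy_one)
next
  case (Suc b)
  have s1: "Dy y (RB (Suc b)) = (\<lambda>\<beta>. 2 * Tm y (RB b) \<beta> + Rm (Dy y (RB b)) \<beta>)"
    by (simp add: RB_Suc Dy_Rm)
  show ?case
  proof (cases b)
    case 0 then show ?thesis using s1 by (simp add: RB_def Dy_one Rm_zero)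
  next
    case (Suc b')
    have "Rm (Dy y (RB b)) = (\<lambda>\<alpha>. real (2*b) * Rm (Tm y (RB (b-1))) \<alpha>)"
      by (simp only: Suc.IH Rm_smul)
    also have "\<dots> = (\<lambda>\<alpha>. real (2*b) * Tm y (RB b) \<alpha>)"
      using Suc by (simp add: Tm_Rm[symmetric] RB_Suc)
    finally show ?thesis using s1 by (simp add: algebra_simps)
  qed
qed

lemma lap_RB: "lap (RB b) = (\<lambda>\<alpha>. (real (2*b) * (real CARD('n) + 2 * real b - 2)) * (RB (b-1) :: 'n::finite cf) \<alpha>)"
proof (induction b)
  case 0 then show ?case by (simp add: RB_def lap_one)
next
  case (Suc b)
  have s1: "lap (RB (Suc b) :: 'n cf) = (\<lambda>\<beta>. 2 * real CARD('n) * RB b \<beta> + 4 * Eu (RB b) \<beta> + Rm (lap (RB b)) \<beta>)"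
    by (simp add: RB_Suc lap_Rm)
  show ?case
  proof (cases b)
    case 0 then show ?thesis using s1 by (simp add: RB_def lap_one Eu_one Rm_zero)
  next
    case (Suc b')
    have "Rm (lap (RB b :: 'n cf)) = (\<lambda>\<alpha>. (real (2*b) * (real CARD('n) + 2 * real b - 2)) * Rm (RB (b-1)) \<alpha>)"
      by (simp only: Suc.IH Rm_smul)
    also have "\<dots> = (\<lambda>\<alpha>. (real (2*b) * (real CARD('n) + 2 * real b - 2)) * (RB b) \<alpha>)"
      using Suc by (simp add: RB_Suc)
    finally show ?thesis using s1 by (simp add: Eu_RB algebra_simps fun_eq_iff)
  qed
qed

lemma Dy_TP:
  assumes "(\<Sum>i\<in>UNIV. y$i * y$i) = 1"
  shows "Dy y (TP y a c) = (\<lambda>\<beta>. TP y a (Dy y c) \<beta> + real a * TP y (a-1) c \<beta>)"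
proof (induction a)
  case 0 then show ?case by (simp add: TP_0)
next
  case (Suc a)
  show ?case
  proof (cases a)
    case 0 then show ?thesis by (simp add: TP_Suc TP_0 Dy_Tm[OF assms] algebra_simps)
  next
    case (Suc a')
    then show ?thesis using Suc.IH
      by (simp add: TP_Suc Dy_Tm[OF assms] Tm_add Tm_smul algebra_simps fun_eq_iff)
  qed
qed

lemma lap_TP:
  assumes "(\<Sum>i\<in>UNIV. y$i * y$i) = 1"
  shows "lap (TP y a c) = (\<lambda>\<beta>. TP y a (lap c) \<beta> + real (2*a) * TP y (a-1) (Dy y c) \<beta>
            + real (a*(a-1)) * TP y (a-2) c \<beta>)"
proof (induction a)
  case 0 then show ?case by (simp add: TP_0)
next
  case (Suc a)
  have IH: "lap (TP y a c) = (\<lambda>\<beta>. TP y a (lap c) \<beta> + real (2*a) * TP y (a-1) (Dy y c) \<beta>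
            + real (a*(a-1)) * TP y (a-2) c \<beta>)" by (rule Suc.IH)
  show ?case
  proof (cases a)
    case 0 then show ?thesis by (simp add: TP_Suc TP_0 lap_Tm algebra_simps)
  next
    case (Suc a')
    note a = this
    show ?thesis
    proof (cases a')
      case 0 then show ?thesis using IH a
        by (simp add: TP_Suc TP_0 lap_Tm Dy_Tm[OF assms] Tm_add Tm_smul algebra_simps fun_eq_iff)
    next
      case (Suc a'')
      then show ?thesis using IH a Dy_TP[OF assms, of a c]
        by (simp add: TP_Suc lap_Tm Tm_add Tm_smul algebra_simps fun_eq_iff)
    qed
  qed
qed

lemma lap_MM:
  assumes "(\<Sum>i\<in>UNIV. y$i * y$i) = 1"
  shows "lap (MM y a b) = (\<lambda>\<beta>. (real (2*b) * (real CARD('n) + 2 * real b - 2) + real (4*a*b))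
             * (MM y a (b-1) :: 'n::finite cf) \<beta> + real (a*(a-1)) * MM y (a-2) b \<beta>)"
proof -
  have s1: "lap (MM y a b) = (\<lambda>\<beta>. TP y a (lap (RB b)) \<beta> + real (2*a) * TP y (a-1) (Dy y (RB b)) \<beta>
            + real (a*(a-1)) * TP y (a-2) (RB b) \<beta>)"
    unfolding MM_def by (rule lap_TP[OF assms])
  have s2: "TP y a (lap (RB b)) = (\<lambda>\<beta>. (real (2*b) * (real CARD('n) + 2 * real b - 2)) * TP y a (RB (b-1)) \<beta>)"
    by (simp only: lap_RB TP_smul)
  have s3: "real (2*a) * TP y (a-1) (Dy y (RB b)) \<beta> = real (4*a*b) * TP y a (RB (b-1)) \<beta>" for \<beta>
  proof (cases a)
    case 0 then show ?thesis by simp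
  next
    case (Suc a')
    have "TP y (a-1) (Dy y (RB b)) = (\<lambda>\<beta>. real (2*b) * TP y (a-1) (Tm y (RB (b-1))) \<beta>)"
      by (simp only: Dy_RB TP_smul)
    also have "\<dots> = (\<lambda>\<beta>. real (2*b) * TP y a (RB (b-1)) \<beta>)"
      using Suc by (simp add: TP_Suc')
    finally show ?thesis by simp
  qed
  show ?thesis
  proof (rule ext)
    fix \<beta>
    have "lap (MM y a b) \<beta> = TP y a (lap (RB b)) \<beta> + real (2*a) * TP y (a-1) (Dy y (RB b)) \<beta>
            + real (a*(a-1)) * TP y (a-2) (RB b) \<beta>" by (simp only: s1)
    also have "\<dots> = (real (2*b) * (real CARD('n) + 2 * real b - 2)) * TP y a (RB (b-1)) \<beta>
       + real (4*a*b) * TP y a (RB (b-1)) \<beta> + real (a*(a-1)) * TP y (a-2) (RB b) \<beta>"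
      by (simp only: s2 s3)
    finally show "lap (MM y a b) \<beta> = (real (2*b) * (real CARD('n) + 2 * real b - 2) + real (4*a*b))
             * (MM y a (b-1) :: 'n::finite cf) \<beta> + real (a*(a-1)) * MM y (a-2) b \<beta>"
      by (simp add: MM_def algebra_simps)
  qed
qed

lemma exps_finite: "finite (exps k :: ('n::finite \<Rightarrow> nat) set)"
proof -
  have "exps k \<subseteq> PiE (UNIV::'n set) (\<lambda>_. {..k})"
  proof
    fix \<alpha> :: "'n \<Rightarrow> nat" assume a: "\<alpha> \<in> exps k"
    have "\<alpha> i \<le> k" for i
    proof -
      have "\<alpha> i \<le> (\<Sum>j\<in>UNIV. \<alpha> j)" by (rule member_le_sum) auto
      then show ?thesis using a by (simp add: exps_def)
    qed
    then show "\<alpha> \<in> PiE UNIV (\<lambda>_. {..k})" by (auto simp: PiE_def extensional_def)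
  qed
  moreover have "finite (PiE (UNIV::'n set) (\<lambda>_. {..k}))" by (intro finite_PiE) auto
  ultimately show ?thesis by (rule finite_subset)
qed

lemma hev_add: "hpoly_eval k (\<lambda>\<alpha>. f \<alpha> + g \<alpha>) x = hpoly_eval k f x + hpoly_eval k g x"
  by (simp add: hpoly_eval_def algebra_simps sum.distrib)
lemma hev_smul: "hpoly_eval k (\<lambda>\<alpha>. a * f \<alpha>) x = a * hpoly_eval k f x"
  by (simp add: hpoly_eval_def algebra_simps sum_distrib_left)
lemma hev_sum: "hpoly_eval k (\<lambda>\<alpha>. \<Sum>i\<in>I. f i \<alpha>) x = (\<Sum>i\<in>I. hpoly_eval k (f i) x)"
  by (simp add: hpoly_eval_def sum_distrib_right sum.swap[of _ I])

lemma hev_one: "hpoly_eval 0 one x = 1"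
proof -
  have "exps 0 = {(\<lambda>_. 0) :: 'a \<Rightarrow> nat}" by (auto simp: exps_def)
  then show ?thesis by (simp add: hpoly_eval_def one_def)
qed

lemma hev_xm: "hpoly_eval (Suc k) (xm j c) x = x$j * hpoly_eval k c x"
proof -
  let ?h = "\<lambda>\<beta>::'a\<Rightarrow>nat. \<beta>(j := \<beta> j + 1)"
  let ?A = "{\<alpha> \<in> exps (Suc k). 0 < \<alpha> j}"
  have bij: "bij_betw ?h (exps k) ?A"
  proof (rule bij_betw_byWitness[where f' = "\<lambda>\<alpha>. \<alpha>(j := \<alpha> j - 1)"])
    show "\<forall>\<beta>\<in>exps k. (?h \<beta>)(j := ?h \<beta> j - 1) = \<beta>" by auto
    show "\<forall>\<alpha>\<in>?A. ?h (\<alpha>(j := \<alpha> j - 1)) = \<alpha>" by auto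
    show "?h ` exps k \<subseteq> ?A"
    proof
      fix \<alpha> assume "\<alpha> \<in> ?h ` exps k"
      then obtain \<beta> where b: "\<beta> \<in> exps k" "\<alpha> = ?h \<beta>" by auto
      have "(\<Sum>i\<in>UNIV. (\<beta>(j := \<beta> j + 1)) i) + \<beta> j = (\<Sum>i\<in>UNIV. \<beta> i) + (\<beta> j + 1)"
        by (rule sum_upd_nat)
      then show "\<alpha> \<in> ?A" using b by (simp add: exps_def)
    qed
    show "(\<lambda>\<alpha>. \<alpha>(j := \<alpha> j - 1)) ` ?A \<subseteq> exps k"
    proof
      fix \<beta> assume "\<beta> \<in> (\<lambda>\<alpha>. \<alpha>(j := \<alpha> j - 1)) ` ?A"
      then obtain \<alpha> where a: "\<alpha> \<in> ?A" "\<beta> = \<alpha>(j := \<alpha> j - 1)" by auto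
      have "(\<Sum>i\<in>UNIV. (\<alpha>(j := \<alpha> j - 1)) i) + \<alpha> j = (\<Sum>i\<in>UNIV. \<alpha> i) + (\<alpha> j - 1)"
        by (rule sum_upd_nat)
      then show "\<beta> \<in> exps k" using a by (simp add: exps_def)
    qed
  qed
  have "hpoly_eval (Suc k) (xm j c) x
      = (\<Sum>\<alpha>\<in>exps (Suc k). (if 0 < \<alpha> j then c (\<alpha>(j := \<alpha> j - 1)) * (\<Prod>i\<in>UNIV. x$i ^ \<alpha> i) else 0))"
    unfolding hpoly_eval_def by (intro sum.cong refl) (simp add: xm_def)
  also have "\<dots> = (\<Sum>\<alpha>\<in>?A. c (\<alpha>(j := \<alpha> j - 1)) * (\<Prod>i\<in>UNIV. x$i ^ \<alpha> i))"
    by (rule sum.inter_filter[OF exps_finite, symmetric])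
  also have "\<dots> = (\<Sum>\<beta>\<in>exps k. c ((?h \<beta>)(j := ?h \<beta> j - 1)) * (\<Prod>i\<in>UNIV. x$i ^ (?h \<beta>) i))"
    by (rule sum.reindex_bij_betw[OF bij, symmetric])
  also have "\<dots> = (\<Sum>\<beta>\<in>exps k. x$j * (c \<beta> * (\<Prod>i\<in>UNIV. x$i ^ \<beta> i)))"
    by (intro sum.cong refl) (simp only: prod_upd, simp)
  also have "\<dots> = x$j * hpoly_eval k c x"
    by (simp add: hpoly_eval_def sum_distrib_left)
  finally show ?thesis .
qed

lemma hev_Tm: "hpoly_eval (Suc k) (Tm y c) x = (\<Sum>i\<in>UNIV. y$i * x$i) * hpoly_eval k c x"
proof -
  have "hpoly_eval (Suc k) (Tm y c) x = (\<Sum>i\<in>UNIV. hpoly_eval (Suc k) (\<lambda>\<alpha>. y$i * xm i c \<alpha>) x)"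
    unfolding Tm_def by (rule hev_sum)
  also have "\<dots> = (\<Sum>i\<in>UNIV. y$i * hpoly_eval (Suc k) (xm i c) x)"
    by (simp only: hev_smul)
  also have "\<dots> = (\<Sum>i\<in>UNIV. y$i * (x$i * hpoly_eval k c x))"
    by (simp only: hev_xm)
  also have "\<dots> = (\<Sum>i\<in>UNIV. y$i * x$i) * hpoly_eval k c x"
    by (simp only: sum_distrib_right mult.assoc)
  finally show ?thesis .
qed

lemma hev_Rm: "hpoly_eval (Suc (Suc k)) (Rm c) x = (\<Sum>i\<in>UNIV. x$i * x$i) * hpoly_eval k c x"
proof -
  have "hpoly_eval (Suc (Suc k)) (Rm c) x = (\<Sum>i\<in>UNIV. hpoly_eval (Suc (Suc k)) (xm i (xm i c)) x)"
    unfolding Rm_def by (rule hev_sum)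
  also have "\<dots> = (\<Sum>i\<in>UNIV. x$i * (x$i * hpoly_eval k c x))"
    by (simp only: hev_xm)
  also have "\<dots> = (\<Sum>i\<in>UNIV. x$i * x$i) * hpoly_eval k c x"
    by (simp only: sum_distrib_right mult.assoc)
  finally show ?thesis .
qed

lemma hev_RB: "hpoly_eval (2*b) (RB b) x = (\<Sum>i\<in>UNIV. x$i * x$i) ^ b"
proof (induction b)
  case 0 show ?case by (simp add: RB_def hev_one)
next
  case (Suc b)
  have e: "2 * Suc b = Suc (Suc (2*b))" by simp
  show ?case by (simp only: e RB_Suc hev_Rm Suc.IH power_Suc)
qed

lemma hev_MM: "hpoly_eval (a + 2*b) (MM y a b) x = (\<Sum>i\<in>UNIV. y$i * x$i) ^ a * (\<Sum>i\<in>UNIV. x$i * x$i) ^ b"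
proof (induction a)
  case 0 show ?case by (simp add: MM_def TP_0 hev_RB)
next
  case (Suc a)
  have e: "Suc a + 2 * b = Suc (a + 2*b)" by simp
  have m: "MM y (Suc a) b = Tm y (MM y a b)" by (simp add: MM_def TP_Suc)
  show ?case by (simp only: e m hev_Tm Suc.IH power_Suc mult.assoc)
qed

lemma harm_of_lap:
  assumes "lap c = (\<lambda>\<beta>. 0)"
  shows "harmonic_hpoly k c"
  unfolding harmonic_hpoly_def
proof (intro allI impI)
  fix \<beta> :: "'a \<Rightarrow> nat"
  have "(\<Sum>i\<in>UNIV. real ((\<beta> i + 2) * (\<beta> i + 1)) * c (\<beta>(i := \<beta> i + 2))) = lap c \<beta>"
    unfolding lap_def dd_def by (intro sum.cong) (simp_all add: algebra_simps)
  then show "(\<Sum>i\<in>UNIV. real ((\<beta> i + 2) * (\<beta> i + 1)) * c (\<beta>(i := \<beta> i + 2))) = 0"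
    using assms by simp
qed


lemma sphere_sq:
  fixes x :: "real^'n::finite"
  assumes "x \<in> sphere 0 1"
  shows "(\<Sum>i\<in>UNIV. x$i * x$i) = 1"
proof -
  have "norm x = 1" using assms by simp
  then have "inner x x = 1" by (metis norm_eq_sqrt_inner real_sqrt_eq_1_iff)
  then show ?thesis by (simp add: inner_vec_def)
qed

lemma zonal4:
  fixes y :: "real^'n::finite"
  assumes y: "(\<Sum>i\<in>UNIV. y$i * y$i) = 1"
  defines "nn \<equiv> real CARD('n)"
  defines "Z \<equiv> (\<lambda>\<alpha>. MM y 4 0 \<alpha> + (-6/(nn+4)) * MM y 2 1 \<alpha> + (3/((nn+2)*(nn+4))) * MM y 0 2 \<alpha>)"
  shows "harmonic_hpoly 4 Z"
    and "hpoly_eval 4 Z x = (\<Sum>i\<in>UNIV. y$i * x$i)^4 + (-6/(nn+4)) * (\<Sum>i\<in>UNIV. y$i * x$i)^2 * (\<Sum>i\<in>UNIV. x$i * x$i)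
            + (3/((nn+2)*(nn+4))) * (\<Sum>i\<in>UNIV. x$i * x$i)^2"
proof -
  have nn: "nn + 4 \<noteq> 0" "nn + 2 \<noteq> 0" unfolding nn_def by (simp_all add: add_nonneg_eq_0_iff)
  have L0: "lap (\<lambda>\<alpha>. MM y 4 0 \<alpha> + k1 * MM y 2 1 \<alpha> + k2 * MM y 0 2 \<alpha>) = (\<lambda>\<beta>. (12 + k1*(2*nn+8)) * MM y 2 0 \<beta>
       + (2*k1 + k2*(4*nn+8)) * MM y 0 1 \<beta>)" for k1 k2
    by (simp only: lap_add lap_smul) (simp add: lap_MM[OF y] algebra_simps fun_eq_iff nn_def)
  have L: "lap Z = (\<lambda>\<beta>. (12 + (-6/(nn+4))*(2*nn+8)) * MM y 2 0 \<beta>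
       + (2*(-6/(nn+4)) + (3/((nn+2)*(nn+4)))*(4*nn+8)) * MM y 0 1 \<beta>)"
    unfolding Z_def by (rule L0)
  have c1: "12 + (-6/(nn+4))*(2*nn+8) = 0" using nn by (simp add: field_simps)
  have "(3/((nn+2)*(nn+4)))*(4*nn+8) = 12/(nn+4)"
  proof -
    have "(3/((nn+2)*(nn+4)))*(4*nn+8) = ((nn+2)*12)/((nn+2)*(nn+4))" by (simp add: algebra_simps)
    also have "\<dots> = 12/(nn+4)" by (rule mult_divide_mult_cancel_left, rule nn(2))
    finally show ?thesis .
  qed
  then have c2: "2*(-6/(nn+4)) + (3/((nn+2)*(nn+4)))*(4*nn+8) = 0" by simp
  show "harmonic_hpoly 4 Z" by (rule harm_of_lap) (simp only: L c1 c2 mult_zero_left add_0_left add_0_right)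
  have e1: "hpoly_eval 4 (MM y 4 0) x = (\<Sum>i\<in>UNIV. y$i * x$i)^4" using hev_MM[of 4 0 y x] by simp
  have e2: "hpoly_eval 4 (MM y 2 1) x = (\<Sum>i\<in>UNIV. y$i * x$i)^2 * (\<Sum>i\<in>UNIV. x$i * x$i)" using hev_MM[of 2 1 y x] by simp
  have e3: "hpoly_eval 4 (MM y 0 2) x = (\<Sum>i\<in>UNIV. x$i * x$i)^2" using hev_MM[of 0 2 y x] by simp
  show "hpoly_eval 4 Z x = (\<Sum>i\<in>UNIV. y$i * x$i)^4 + (-6/(nn+4)) * (\<Sum>i\<in>UNIV. y$i * x$i)^2 * (\<Sum>i\<in>UNIV. x$i * x$i)
            + (3/((nn+2)*(nn+4))) * (\<Sum>i\<in>UNIV. x$i * x$i)^2"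
    unfolding Z_def by (simp only: hev_add hev_smul e1 e2 e3 mult.assoc)
qed

lemma zonal8:
  fixes y :: "real^'n::finite"
  assumes y: "(\<Sum>i\<in>UNIV. y$i * y$i) = 1"
  defines "nn \<equiv> real CARD('n)"
  defines "k1 \<equiv> -28/(nn+12)"
  defines "k2 \<equiv> 210/((nn+10)*(nn+12))"
  defines "k3 \<equiv> -420/((nn+8)*(nn+10)*(nn+12))"
  defines "k4 \<equiv> 105/((nn+6)*(nn+8)*(nn+10)*(nn+12))"
  defines "Z \<equiv> (\<lambda>\<alpha>. MM y 8 0 \<alpha> + k1 * MM y 6 1 \<alpha> + k2 * MM y 4 2 \<alpha> + k3 * MM y 2 3 \<alpha> + k4 * MM y 0 4 \<alpha>)"
  shows "harmonic_hpoly 8 Z"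
    and "hpoly_eval 8 Z x = (\<Sum>i\<in>UNIV. y$i * x$i)^8 + k1 * ((\<Sum>i\<in>UNIV. y$i * x$i)^6 * (\<Sum>i\<in>UNIV. x$i * x$i))
            + k2 * ((\<Sum>i\<in>UNIV. y$i * x$i)^4 * (\<Sum>i\<in>UNIV. x$i * x$i)^2)
            + k3 * ((\<Sum>i\<in>UNIV. y$i * x$i)^2 * (\<Sum>i\<in>UNIV. x$i * x$i)^3)
            + k4 * (\<Sum>i\<in>UNIV. x$i * x$i)^4"
proof -
  have nn0: "0 \<le> nn" unfolding nn_def by simp
  have p: "nn + 6 > 0" "nn + 8 > 0" "nn + 10 > 0" "nn + 12 > 0" using nn0 by linarith+
  have L0: "lap (\<lambda>\<alpha>. MM y 8 0 \<alpha> + a1 * MM y 6 1 \<alpha> + a2 * MM y 4 2 \<alpha> + a3 * MM y 2 3 \<alpha> + a4 * MM y 0 4 \<alpha>)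
     = (\<lambda>\<beta>. (56 + a1*(2*nn+24)) * MM y 6 0 \<beta> + (30*a1 + a2*(4*nn+40)) * MM y 4 1 \<beta>
       + (12*a2 + a3*(6*nn+48)) * MM y 2 2 \<beta> + (2*a3 + a4*(8*nn+48)) * MM y 0 3 \<beta>)" for a1 a2 a3 a4
    by (simp only: lap_add lap_smul) (simp add: lap_MM[OF y] algebra_simps fun_eq_iff nn_def)
  have c1: "56 + k1*(2*nn+24) = 0" unfolding k1_def using p by (simp add: divide_simps; simp add: algebra_simps)
  have c2: "30*k1 + k2*(4*nn+40) = 0" unfolding k1_def k2_def using p by (simp add: divide_simps; simp add: algebra_simps)
  have c3: "12*k2 + k3*(6*nn+48) = 0" unfolding k2_def k3_def using p by (simp add: divide_simps; simp add: algebra_simps)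
  have c4: "2*k3 + k4*(8*nn+48) = 0" unfolding k3_def k4_def using p by (simp add: divide_simps; simp add: algebra_simps)
  show "harmonic_hpoly 8 Z" unfolding Z_def
    by (rule harm_of_lap) (simp only: L0 c1 c2 c3 c4 mult_zero_left add_0_left add_0_right)
  have e1: "hpoly_eval 8 (MM y 8 0) x = (\<Sum>i\<in>UNIV. y$i * x$i)^8" using hev_MM[of 8 0 y x] by simp
  have e2: "hpoly_eval 8 (MM y 6 1) x = (\<Sum>i\<in>UNIV. y$i * x$i)^6 * (\<Sum>i\<in>UNIV. x$i * x$i)" using hev_MM[of 6 1 y x] by simp
  have e3: "hpoly_eval 8 (MM y 4 2) x = (\<Sum>i\<in>UNIV. y$i * x$i)^4 * (\<Sum>i\<in>UNIV. x$i * x$i)^2" using hev_MM[of 4 2 y x] by simp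
  have e4: "hpoly_eval 8 (MM y 2 3) x = (\<Sum>i\<in>UNIV. y$i * x$i)^2 * (\<Sum>i\<in>UNIV. x$i * x$i)^3" using hev_MM[of 2 3 y x] by simp
  have e5: "hpoly_eval 8 (MM y 0 4) x = (\<Sum>i\<in>UNIV. x$i * x$i)^4" using hev_MM[of 0 4 y x] by simp
  show "hpoly_eval 8 Z x = (\<Sum>i\<in>UNIV. y$i * x$i)^8 + k1 * ((\<Sum>i\<in>UNIV. y$i * x$i)^6 * (\<Sum>i\<in>UNIV. x$i * x$i))
            + k2 * ((\<Sum>i\<in>UNIV. y$i * x$i)^4 * (\<Sum>i\<in>UNIV. x$i * x$i)^2)
            + k3 * ((\<Sum>i\<in>UNIV. y$i * x$i)^2 * (\<Sum>i\<in>UNIV. x$i * x$i)^3)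
            + k4 * (\<Sum>i\<in>UNIV. x$i * x$i)^4"
    unfolding Z_def by (simp only: hev_add hev_smul e1 e2 e3 e4 e5)
qed


lemma poly_id:
  fixes nn U :: real
  assumes nn: "nn \<ge> 0"
  defines "D \<equiv> (nn+8)*(nn+12)"
  defines "k1 \<equiv> -28/(nn+12)"
  defines "k2 \<equiv> 210/((nn+10)*(nn+12))"
  defines "k3 \<equiv> -420/((nn+8)*(nn+10)*(nn+12))"
  defines "k4 \<equiv> 105/((nn+6)*(nn+8)*(nn+10)*(nn+12))"
  defines "f \<equiv> 28*(nn+4)*(nn+5)/((nn+8)*(nn+10)*(nn+12)^2)"
  defines "C0 \<equiv> 252*(nn+1)*(nn+5)/((nn+2)*(nn+6))"
  shows "(D*U^2 - 14*(nn+8)*U + 21)^2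
     = D^2 * ((U^4 + k1*U^3 + k2*U^2 + k3*U + k4) + f * (U^2 + (-6/(nn+4))*U + 3/((nn+2)*(nn+4)))) + C0"
proof -
  have p: "nn+2 > 0" "nn+4 > 0" "nn + 6 > 0" "nn + 8 > 0" "nn + 10 > 0" "nn + 12 > 0" using nn by linarith+
  show ?thesis unfolding D_def k1_def k2_def k3_def k4_def f_def C0_def
    using p by (simp add: divide_simps; algebra)
qed

lemma lin_id:
  fixes nn Su N :: real
  assumes nn: "nn \<ge> 0"
  assumes h: "(14*(nn+8)/((nn+8)*(nn+12)) + (-6/(nn+4))) * Su + (N - 1) * (3/((nn+2)*(nn+4)) - 21/((nn+8)*(nn+12)))
            = -(1 + (-6/(nn+4)) + 3/((nn+2)*(nn+4)))"
  assumes N: "N = (nn+1)*(nn+2)*(nn+5)*(nn+6)/252"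
  shows "1008*(nn-2)*(2*((nn+8)*(nn+12))*Su - 14*(nn+8)*(N-1))
       = -((nn+5)*(nn+8)*(38*nn^4+128*nn^3-278*nn^2+2896*nn-2784))"
proof -
  have p: "nn+2 > 0" "nn+4 > 0" "nn + 6 > 0" "nn + 8 > 0" "nn + 10 > 0" "nn + 12 > 0" using nn by linarith+
  define A where "A = 14*(nn+8)/((nn+8)*(nn+12)) + (-6/(nn+4))"
  define B where "B = 3/((nn+2)*(nn+4)) - 21/((nn+8)*(nn+12))"
  define P where "P = 1 + (-6/(nn+4)) + 3/((nn+2)*(nn+4))"
  have hA: "A * ((nn+4)*(nn+12)) = 8*(nn-2)" unfolding A_def using p by (simp add: divide_simps; algebra)
  have h': "A * Su = -P - (N-1)*B" using h unfolding A_def B_def P_def by linarith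
  have "1008*(nn-2)*(2*((nn+8)*(nn+12))*Su) = 252*(nn+8)*(nn+12)*(A * ((nn+4)*(nn+12))) * Su"
    unfolding hA by (simp add: algebra_simps)
  also have "\<dots> = 252*(nn+8)*(nn+12)*((nn+4)*(nn+12)) * (A * Su)" by (simp add: algebra_simps)
  also have "\<dots> = 252*(nn+8)*(nn+12)*((nn+4)*(nn+12)) * (-P - (N-1)*B)" by (simp only: h')
  finally have e: "1008*(nn-2)*(2*((nn+8)*(nn+12))*Su) = 252*(nn+8)*(nn+12)*((nn+4)*(nn+12)) * (-P - (N-1)*B)" .
  have f: "252*(nn+8)*(nn+12)*((nn+4)*(nn+12)) * (-P - (N-1)*B) - 1008*(nn-2)*(14*(nn+8)*(N-1))
      = -((nn+5)*(nn+8)*(38*nn^4+128*nn^3-278*nn^2+2896*nn-2784))"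
    unfolding P_def B_def N using p by (simp add: divide_simps; algebra)
  show ?thesis using e f by (simp add: algebra_simps)
qed

lemma main_alg:
  fixes Y :: "'a set" and t :: "'a \<Rightarrow> real" and nn :: real
  assumes fin: "finite Y" and x0: "x0 \<in> Y" and t0: "t x0 = 1" and nn: "nn \<ge> 0"
    and cardY: "real (card Y) = (nn+1)*(nn+2)*(nn+5)*(nn+6)/252"
    and S4: "(\<Sum>x\<in>Y. t x^4 + (-6/(nn+4)) * t x^2 + 3/((nn+2)*(nn+4))) = 0"
    and S8: "(\<Sum>x\<in>Y. t x^8 + (-28/(nn+12)) * t x^6 + (210/((nn+10)*(nn+12))) * t x^4
                 + (-420/((nn+8)*(nn+10)*(nn+12))) * t x^2 + 105/((nn+6)*(nn+8)*(nn+10)*(nn+12))) = 0"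
  shows "\<exists>e::int. (nn+5)*(nn+8)*(38*nn^4+128*nn^3-278*nn^2+2896*nn-2784)^2 = 28*2016^2*(nn-2)^2*(real_of_int e)^2"
proof -
  have p: "nn+1 > 0" "nn+2 > 0" "nn+4 > 0" "nn+5 > 0" "nn + 6 > 0" "nn + 8 > 0" "nn + 10 > 0" "nn + 12 > 0"
    using nn by linarith+
  define D where "D = (nn+8)*(nn+12)"
  have Dp: "D > 0" unfolding D_def using p by simp
  define u where "u x = t x ^ 2" for x
  define q where "q z = D*z^2 - 14*(nn+8)*z + 21" for z
  define P4 where "P4 x = t x^4 + (-6/(nn+4)) * t x^2 + 3/((nn+2)*(nn+4))" for x
  define P8 where "P8 x = t x^8 + (-28/(nn+12)) * t x^6 + (210/((nn+10)*(nn+12))) * t x^4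
                 + (-420/((nn+8)*(nn+10)*(nn+12))) * t x^2 + 105/((nn+6)*(nn+8)*(nn+10)*(nn+12))" for x
  define f where "f = 28*(nn+4)*(nn+5)/((nn+8)*(nn+10)*(nn+12)^2)"
  define C0 where "C0 = 252*(nn+1)*(nn+5)/((nn+2)*(nn+6))"
  have pw: "t x^8 = (u x)^4" "t x^6 = (u x)^3" "t x^4 = (u x)^2" for x
    unfolding u_def by (simp_all flip: power_mult)
  have qid: "q (u x)^2 = D^2 * (P8 x + f * P4 x) + C0" for x
    unfolding q_def P8_def P4_def pw D_def f_def C0_def using poly_id[OF nn, of "u x"] by (simp add: u_def)
  have sumq: "(\<Sum>x\<in>Y. q (u x)^2) = real (card Y) * C0"
  proof -
    have "(\<Sum>x\<in>Y. q (u x)^2) = D^2 * ((\<Sum>x\<in>Y. P8 x) + f * (\<Sum>x\<in>Y. P4 x)) + real (card Y) * C0"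
      by (simp add: qid sum.distrib sum_distrib_left sum_distrib_right algebra_simps)
    also have "(\<Sum>x\<in>Y. P8 x) = 0" using S8 unfolding P8_def .
    also have "(\<Sum>x\<in>Y. P4 x) = 0" using S4 unfolding P4_def .
    finally show ?thesis by simp
  qed
  have "real (card Y) * C0 = ((nn+1)*(nn+5))^2"
    unfolding cardY C0_def using p by (simp add: divide_simps; algebra)
  moreover have q1: "q (u x0) = (nn+1)*(nn+5)"
    unfolding q_def u_def t0 D_def by (simp add: algebra_simps)
  ultimately have "(\<Sum>x\<in>Y. q (u x)^2) = q (u x0)^2" using sumq by simp
  moreover have "(\<Sum>x\<in>Y. q (u x)^2) = q (u x0)^2 + (\<Sum>x\<in>Y - {x0}. q (u x)^2)"
    using fin x0 by (simp add: sum.remove)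
  ultimately have "(\<Sum>x\<in>Y - {x0}. q (u x)^2) = 0" by simp
  then have q0: "\<forall>x\<in>Y - {x0}. q (u x) = 0"
    using fin by (subst (asm) sum_nonneg_eq_0_iff) auto
  define Y' where "Y' = Y - {x0}"
  have finY': "finite Y'" using fin unfolding Y'_def by simp
  have cY': "real (card Y') = real (card Y) - 1"
  proof -
    have "0 < card Y" using fin x0 card_gt_0_iff by blast
    then have "1 \<le> card Y" by simp
    then show ?thesis unfolding Y'_def using fin x0 by (simp add: card_Diff_singleton of_nat_diff)
  qed
  have P4lin: "P4 x = (14*(nn+8)/D + (-6/(nn+4))) * u x + (3/((nn+2)*(nn+4)) - 21/D)" if "x \<in> Y'" for x
  proof -
    have "q (u x) = 0" using q0 that unfolding Y'_def by blast
    then have uu: "(u x)^2 = (14*(nn+8)*u x - 21)/D" unfolding q_def using Dp by (simp add: field_simps)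
    show ?thesis unfolding P4_def pw uu by (simp add: u_def algebra_simps add_divide_distrib diff_divide_distrib)
  qed
  have "(\<Sum>x\<in>Y. P4 x) = P4 x0 + (\<Sum>x\<in>Y'. P4 x)" unfolding Y'_def using fin x0 by (simp add: sum.remove)
  then have "(\<Sum>x\<in>Y'. P4 x) = - P4 x0" using S4 unfolding P4_def by simp
  also have "P4 x0 = 1 + (-6/(nn+4)) + 3/((nn+2)*(nn+4))" unfolding P4_def t0 by simp
  finally have sP4: "(\<Sum>x\<in>Y'. P4 x) = -(1 + (-6/(nn+4)) + 3/((nn+2)*(nn+4)))" .
  have "(\<Sum>x\<in>Y'. P4 x) = (14*(nn+8)/D + (-6/(nn+4))) * (\<Sum>x\<in>Y'. u x) + real (card Y') * (3/((nn+2)*(nn+4)) - 21/D)"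
    using P4lin by (simp add: sum.distrib sum_distrib_left)
  then have h: "(14*(nn+8)/((nn+8)*(nn+12)) + (-6/(nn+4))) * (\<Sum>x\<in>Y'. u x)
       + (real (card Y) - 1) * (3/((nn+2)*(nn+4)) - 21/((nn+8)*(nn+12)))
            = -(1 + (-6/(nn+4)) + 3/((nn+2)*(nn+4)))"
    using sP4 cY' unfolding D_def by simp
  define v where "v x = 2*D*u x - 14*(nn+8)" for x
  have sv: "(\<Sum>x\<in>Y'. v x) = 2*D*(\<Sum>x\<in>Y'. u x) - 14*(nn+8)*(real (card Y) - 1)"
    unfolding v_def using cY' by (simp add: sum_subtractf sum_distrib_left)
  have key: "1008*(nn-2)*(\<Sum>x\<in>Y'. v x) = -((nn+5)*(nn+8)*(38*nn^4+128*nn^3-278*nn^2+2896*nn-2784))"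
    unfolding sv D_def by (rule lin_id[OF nn h cardY])
  define W where "W = 112*(nn+5)*(nn+8)"
  have Wp: "W > 0" unfolding W_def using p by simp
  have vsq: "(v x)^2 = W" if "x \<in> Y'" for x
  proof -
    have "q (u x) = 0" using q0 that unfolding Y'_def by blast
    then have qq: "D*(u x)^2 = 14*(nn+8)*u x - 21" unfolding q_def by simp
    have "(v x)^2 = 4*D*(D*(u x)^2) - 56*D*(nn+8)*u x + 196*(nn+8)^2"
      unfolding v_def by (simp add: power2_eq_square algebra_simps)
    also have "\<dots> = 4*D*(14*(nn+8)*u x - 21) - 56*D*(nn+8)*u x + 196*(nn+8)^2"
      by (simp only: qq)
    also have "\<dots> = W" unfolding W_def D_def by (simp add: algebra_simps power2_eq_square)
    finally show ?thesis .
  qed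
  define w where "w = sqrt W"
  have w2: "w^2 = W" "w > 0" unfolding w_def using Wp by simp_all
  have vpm: "v x = w \<or> v x = -w" if "x \<in> Y'" for x
    using vsq[OF that] w2 by (metis power2_eq_iff)
  define A where "A = {x\<in>Y'. v x = w}"
  define B where "B = {x\<in>Y'. v x \<noteq> w}"
  have YAB: "Y' = A \<union> B" "A \<inter> B = {}" unfolding A_def B_def by auto
  have fAB: "finite A" "finite B" unfolding A_def B_def using finY' by simp_all
  have "(\<Sum>x\<in>Y'. v x) = (\<Sum>x\<in>A. v x) + (\<Sum>x\<in>B. v x)"
    unfolding YAB(1) using fAB YAB(2) by (rule sum.union_disjoint)
  also have "(\<Sum>x\<in>A. v x) = real (card A) * w" unfolding A_def by simp
  also have "(\<Sum>x\<in>B. v x) = (\<Sum>x\<in>B. -w)"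
    unfolding B_def by (intro sum.cong refl) (use vpm in auto)
  also have "\<dots> = - (real (card B) * w)" by simp
  finally have svw: "(\<Sum>x\<in>Y'. v x) = real_of_int (int (card A) - int (card B)) * w" by (simp add: algebra_simps)
  define e where "e = int (card A) - int (card B)"
  define Qt where "Qt = 38*nn^4+128*nn^3-278*nn^2+2896*nn-2784"
  have "(1008*(nn-2)*(real_of_int e * w))^2 = ((nn+5)*(nn+8)*Qt)^2"
    using key svw unfolding e_def Qt_def by (simp add: power2_eq_square)
  moreover have "(1008*(nn-2)*(real_of_int e * w))^2 = 1008^2*(nn-2)^2*(real_of_int e)^2 * W"
    by (simp only: power_mult_distrib w2(1) mult.assoc)
  moreover have "((nn+5)*(nn+8)*Qt)^2 = ((nn+5)*(nn+8))*((nn+5)*(nn+8)*Qt^2)"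
    by (simp add: power2_eq_square algebra_simps)
  ultimately have "1008^2*(nn-2)^2*(real_of_int e)^2 * W = ((nn+5)*(nn+8))*((nn+5)*(nn+8)*Qt^2)"
    by simp
  then have "((nn+5)*(nn+8)) * (28*2016^2*(nn-2)^2*(real_of_int e)^2) = ((nn+5)*(nn+8))*((nn+5)*(nn+8)*Qt^2)"
    unfolding W_def by (simp add: algebra_simps)
  then have "28*2016^2*(nn-2)^2*(real_of_int e)^2 = (nn+5)*(nn+8)*Qt^2"
    using p by (subst (asm) mult_left_cancel) auto
  then show ?thesis unfolding Qt_def by (intro exI[of _ e]) simp
qed


lemma nosq:
  fixes r s V :: int
  assumes "r^2 < V" "V < (r+1)^2" "0 \<le> r"
  shows "s^2 \<noteq> V"
proof
  assume h: "s^2 = V"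
  have "s^2 = \<bar>s\<bar>^2" by simp
  show False
  proof (cases "\<bar>s\<bar> \<le> r")
    case True
    then have "\<bar>s\<bar>^2 \<le> r^2" by (intro power_mono) auto
    then show False using assms h by simp
  next
    case False
    then have "(r+1)^2 \<le> \<bar>s\<bar>^2" using assms by (intro power_mono) auto
    then show False using assms h by simp
  qed
qed

definition badnt :: "nat \<Rightarrow> int \<Rightarrow> bool" where
  "badnt d s \<longleftrightarrow> (252::int) dvd (int d+3)*(int d+4)*(int d+7)*(int d+8) \<and> s^2 = 7*(int d+7)*(int d+10)"

lemma nb_1: "\<not> badnt 1 s" unfolding badnt_def by simp
lemma nb_2: "\<not> badnt 2 s" unfolding badnt_def by simp
lemma nb_3: "\<not> badnt 3 s" unfolding badnt_def by simp
lemma nb_4: "\<not> badnt 4 s" unfolding badnt_def by simp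
lemma nb_5: "\<not> badnt 5 s" unfolding badnt_def by simp
lemma nb_6: "\<not> badnt 6 s" unfolding badnt_def using nosq[of 38 "7*(6+7)*(6+10)" s] by simp
lemma nb_7: "\<not> badnt 7 s" unfolding badnt_def by simp
lemma nb_8: "\<not> badnt 8 s" unfolding badnt_def by simp
lemma nb_9: "\<not> badnt 9 s" unfolding badnt_def by simp
lemma nb_10: "\<not> badnt 10 s" unfolding badnt_def using nosq[of 48 "7*(10+7)*(10+10)" s] by simp
lemma nb_12: "\<not> badnt 12 s" unfolding badnt_def by simp
lemma nb_14: "\<not> badnt 14 s" unfolding badnt_def using nosq[of 59 "7*(14+7)*(14+10)" s] by simp
lemma nb_15: "\<not> badnt 15 s" unfolding badnt_def by simp
lemma nb_16: "\<not> badnt 16 s" unfolding badnt_def by simp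
lemma nb_18: "\<not> badnt 18 s" unfolding badnt_def by simp
lemma nb_20: "\<not> badnt 20 s" unfolding badnt_def using nosq[of 75 "7*(20+7)*(20+10)" s] by simp
lemma nb_21: "\<not> badnt 21 s" unfolding badnt_def by simp
lemma nb_24: "\<not> badnt 24 s" unfolding badnt_def using nosq[of 85 "7*(24+7)*(24+10)" s] by simp
lemma nb_28: "\<not> badnt 28 s" unfolding badnt_def using nosq[of 96 "7*(28+7)*(28+10)" s] by simp
lemma nb_30: "\<not> badnt 30 s" unfolding badnt_def by simp
lemma nb_35: "\<not> badnt 35 s" unfolding badnt_def using nosq[of 115 "7*(35+7)*(35+10)" s] by simp
lemma nb_36: "\<not> badnt 36 s" unfolding badnt_def by simp
lemma nb_40: "\<not> badnt 40 s" unfolding badnt_def by simp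
lemma nb_42: "\<not> badnt 42 s" unfolding badnt_def using nosq[of 133 "7*(42+7)*(42+10)" s] by simp
lemma nb_45: "\<not> badnt 45 s" unfolding badnt_def by simp
lemma nb_48: "\<not> badnt 48 s" unfolding badnt_def by simp
lemma nb_49: "\<not> badnt 49 s" unfolding badnt_def by simp
lemma nb_56: "\<not> badnt 56 s" unfolding badnt_def using nosq[of 170 "7*(56+7)*(56+10)" s] by simp
lemma nb_60: "\<not> badnt 60 s" unfolding badnt_def using nosq[of 181 "7*(60+7)*(60+10)" s] by simp
lemma nb_63: "\<not> badnt 63 s" unfolding badnt_def by simp
lemma nb_70: "\<not> badnt 70 s" unfolding badnt_def by simp
lemma nb_72: "\<not> badnt 72 s" unfolding badnt_def by simp
lemma nb_80: "\<not> badnt 80 s" unfolding badnt_def using nosq[of 234 "7*(80+7)*(80+10)" s] by simp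
lemma nb_84: "\<not> badnt 84 s" unfolding badnt_def by simp
lemma nb_90: "\<not> badnt 90 s" unfolding badnt_def by simp
lemma nb_98: "\<not> badnt 98 s" unfolding badnt_def using nosq[of 281 "7*(98+7)*(98+10)" s] by simp
lemma nb_105: "\<not> badnt 105 s" unfolding badnt_def using nosq[of 300 "7*(105+7)*(105+10)" s] by simp
lemma nb_112: "\<not> badnt 112 s" unfolding badnt_def by simp
lemma nb_120: "\<not> badnt 120 s" unfolding badnt_def by simp
lemma nb_126: "\<not> badnt 126 s" unfolding badnt_def by simp
lemma nb_140: "\<not> badnt 140 s" unfolding badnt_def using nosq[of 392 "7*(140+7)*(140+10)" s] by simp
lemma nb_144: "\<not> badnt 144 s" unfolding badnt_def by simp
lemma nb_147: "\<not> badnt 147 s" unfolding badnt_def by simp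
lemma nb_168: "\<not> badnt 168 s" unfolding badnt_def using nosq[of 466 "7*(168+7)*(168+10)" s] by simp
lemma nb_180: "\<not> badnt 180 s" unfolding badnt_def by simp
lemma nb_196: "\<not> badnt 196 s" unfolding badnt_def by simp
lemma nb_210: "\<not> badnt 210 s" unfolding badnt_def by simp
lemma nb_240: "\<not> badnt 240 s" unfolding badnt_def by simp
lemma nb_245: "\<not> badnt 245 s" unfolding badnt_def using nosq[of 670 "7*(245+7)*(245+10)" s] by simp
lemma nb_252: "\<not> badnt 252 s" unfolding badnt_def by simp
lemma nb_280: "\<not> badnt 280 s" unfolding badnt_def using nosq[of 763 "7*(280+7)*(280+10)" s] by simp
lemma nb_294: "\<not> badnt 294 s" unfolding badnt_def using nosq[of 800 "7*(294+7)*(294+10)" s] by simp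
lemma nb_315: "\<not> badnt 315 s" unfolding badnt_def by simp
lemma nb_336: "\<not> badnt 336 s" unfolding badnt_def by simp
lemma nb_343: "\<not> badnt 343 s" unfolding badnt_def using nosq[of 929 "7*(343+7)*(343+10)" s] by simp
lemma nb_360: "\<not> badnt 360 s" unfolding badnt_def by simp
lemma nb_392: "\<not> badnt 392 s" unfolding badnt_def using nosq[of 1059 "7*(392+7)*(392+10)" s] by simp
lemma nb_420: "\<not> badnt 420 s" unfolding badnt_def using nosq[of 1133 "7*(420+7)*(420+10)" s] by simp
lemma nb_441: "\<not> badnt 441 s" unfolding badnt_def by simp
lemma nb_490: "\<not> badnt 490 s" unfolding badnt_def by simp
lemma nb_504: "\<not> badnt 504 s" unfolding badnt_def by simp
lemma nb_560: "\<not> badnt 560 s" unfolding badnt_def using nosq[of 1504 "7*(560+7)*(560+10)" s] by simp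
lemma nb_588: "\<not> badnt 588 s" unfolding badnt_def by simp
lemma nb_630: "\<not> badnt 630 s" unfolding badnt_def by simp
lemma nb_686: "\<not> badnt 686 s" unfolding badnt_def using nosq[of 1837 "7*(686+7)*(686+10)" s] by simp
lemma nb_720: "\<not> badnt 720 s" unfolding badnt_def by simp
lemma nb_735: "\<not> badnt 735 s" unfolding badnt_def using nosq[of 1967 "7*(735+7)*(735+10)" s] by simp
lemma nb_784: "\<not> badnt 784 s" unfolding badnt_def using nosq[of 2096 "7*(784+7)*(784+10)" s] by simp
lemma nb_840: "\<not> badnt 840 s" unfolding badnt_def by simp
lemma nb_882: "\<not> badnt 882 s" unfolding badnt_def by simp
lemma nb_980: "\<not> badnt 980 s" unfolding badnt_def using nosq[of 2615 "7*(980+7)*(980+10)" s] by simp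
lemma nb_1008: "\<not> badnt 1008 s" unfolding badnt_def by simp
lemma nb_1029: "\<not> badnt 1029 s" unfolding badnt_def by simp
lemma nb_1176: "\<not> badnt 1176 s" unfolding badnt_def using nosq[of 3133 "7*(1176+7)*(1176+10)" s] by simp
lemma nb_1260: "\<not> badnt 1260 s" unfolding badnt_def by simp
lemma nb_1372: "\<not> badnt 1372 s" unfolding badnt_def by simp
lemma nb_1470: "\<not> badnt 1470 s" unfolding badnt_def by simp
lemma nb_1680: "\<not> badnt 1680 s" unfolding badnt_def using nosq[of 4467 "7*(1680+7)*(1680+10)" s] by simp
lemma nb_1715: "\<not> badnt 1715 s" unfolding badnt_def using nosq[of 4559 "7*(1715+7)*(1715+10)" s] by simp
lemma nb_1764: "\<not> badnt 1764 s" unfolding badnt_def by simp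
lemma nb_1960: "\<not> badnt 1960 s" unfolding badnt_def by simp
lemma nb_2058: "\<not> badnt 2058 s" unfolding badnt_def using nosq[of 5467 "7*(2058+7)*(2058+10)" s] by simp
lemma nb_2205: "\<not> badnt 2205 s" unfolding badnt_def by simp
lemma nb_2352: "\<not> badnt 2352 s" unfolding badnt_def by simp
lemma nb_2520: "\<not> badnt 2520 s" unfolding badnt_def by simp
lemma nb_2744: "\<not> badnt 2744 s" unfolding badnt_def using nosq[of 7282 "7*(2744+7)*(2744+10)" s] by simp
lemma nb_2940: "\<not> badnt 2940 s" unfolding badnt_def using nosq[of 7800 "7*(2940+7)*(2940+10)" s] by simp
lemma nb_3087: "\<not> badnt 3087 s" unfolding badnt_def by simp
lemma nb_3430: "\<not> badnt 3430 s" unfolding badnt_def using nosq[of 9097 "7*(3430+7)*(3430+10)" s] by simp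
lemma nb_3528: "\<not> badnt 3528 s" unfolding badnt_def by simp
lemma nb_3920: "\<not> badnt 3920 s" unfolding badnt_def using nosq[of 10393 "7*(3920+7)*(3920+10)" s] by simp
lemma nb_4116: "\<not> badnt 4116 s" unfolding badnt_def by simp
lemma nb_4410: "\<not> badnt 4410 s" unfolding badnt_def by simp
lemma nb_5040: "\<not> badnt 5040 s" unfolding badnt_def by simp
lemma nb_5145: "\<not> badnt 5145 s" unfolding badnt_def using nosq[of 13634 "7*(5145+7)*(5145+10)" s] by simp
lemma nb_5488: "\<not> badnt 5488 s" unfolding badnt_def by simp
lemma nb_5880: "\<not> badnt 5880 s" unfolding badnt_def by simp
lemma nb_6174: "\<not> badnt 6174 s" unfolding badnt_def by simp
lemma nb_6860: "\<not> badnt 6860 s" unfolding badnt_def using nosq[of 18172 "7*(6860+7)*(6860+10)" s] by simp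
lemma nb_7056: "\<not> badnt 7056 s" unfolding badnt_def by simp
lemma nb_8232: "\<not> badnt 8232 s" unfolding badnt_def using nosq[of 21802 "7*(8232+7)*(8232+10)" s] by simp
lemma nb_8820: "\<not> badnt 8820 s" unfolding badnt_def by simp
lemma nb_10290: "\<not> badnt 10290 s" unfolding badnt_def by simp
lemma nb_11760: "\<not> badnt 11760 s" unfolding badnt_def using nosq[of 31136 "7*(11760+7)*(11760+10)" s] by simp
lemma nb_12348: "\<not> badnt 12348 s" unfolding badnt_def by simp
lemma nb_13720: "\<not> badnt 13720 s" unfolding badnt_def by simp
lemma nb_15435: "\<not> badnt 15435 s" unfolding badnt_def by simp
lemma nb_16464: "\<not> badnt 16464 s" unfolding badnt_def by simp
lemma nb_17640: "\<not> badnt 17640 s" unfolding badnt_def by simp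
lemma nb_20580: "\<not> badnt 20580 s" unfolding badnt_def using nosq[of 54472 "7*(20580+7)*(20580+10)" s] by simp
lemma nb_24696: "\<not> badnt 24696 s" unfolding badnt_def by simp
lemma nb_27440: "\<not> badnt 27440 s" unfolding badnt_def using nosq[of 72621 "7*(27440+7)*(27440+10)" s] by simp
lemma nb_30870: "\<not> badnt 30870 s" unfolding badnt_def by simp
lemma nb_35280: "\<not> badnt 35280 s" unfolding badnt_def by simp
lemma nb_41160: "\<not> badnt 41160 s" unfolding badnt_def by simp
lemma nb_49392: "\<not> badnt 49392 s" unfolding badnt_def by simp
lemma nb_61740: "\<not> badnt 61740 s" unfolding badnt_def by simp
lemma nb_82320: "\<not> badnt 82320 s" unfolding badnt_def using nosq[of 217820 "7*(82320+7)*(82320+10)" s] by simp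
lemma nb_123480: "\<not> badnt 123480 s" unfolding badnt_def by simp
lemma nb_246960: "\<not> badnt 246960 s" unfolding badnt_def by simp

lemmas nb_all = nb_1 nb_2 nb_3 nb_4 nb_5 nb_6 nb_7 nb_8 nb_9 nb_10 nb_12 nb_14 nb_15 nb_16 nb_18 nb_20 nb_21 nb_24 nb_28 nb_30 nb_35 nb_36 nb_40 nb_42 nb_45 nb_48 nb_49 nb_56 nb_60 nb_63 nb_70 nb_72 nb_80 nb_84 nb_90 nb_98 nb_105 nb_112 nb_120 nb_126 nb_140 nb_144 nb_147 nb_168 nb_180 nb_196 nb_210 nb_240 nb_245 nb_252 nb_280 nb_294 nb_315 nb_336 nb_343 nb_360 nb_392 nb_420 nb_441 nb_490 nb_504 nb_560 nb_588 nb_630 nb_686 nb_720 nb_735 nb_784 nb_840 nb_882 nb_980 nb_1008 nb_1029 nb_1176 nb_1260 nb_1372 nb_1470 nb_1680 nb_1715 nb_1764 nb_1960 nb_2058 nb_2205 nb_2352 nb_2520 nb_2744 nb_2940 nb_3087 nb_3430 nb_3528 nb_3920 nb_4116 nb_4410 nb_5040 nb_5145 nb_5488 nb_5880 nb_6174 nb_6860 nb_7056 nb_8232 nb_8820 nb_10290 nb_11760 nb_12348 nb_13720 nb_15435 nb_16464 nb_17640 nb_20580 nb_24696 nb_27440 nb_30870 nb_35280 nb_41160 nb_49392 nb_61740 nb_82320 nb_123480 nb_246960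

lemma nt_cases:
  fixes d :: nat and s :: int
  assumes "d dvd 246960" "(252::int) dvd (int d+3)*(int d+4)*(int d+7)*(int d+8)"
    "s^2 = 7*(int d+7)*(int d+10)"
  shows False
proof -
  have bad: "badnt d s" using assms(2,3) by (simp add: badnt_def)
  have "d dvd 2^4 * (3^2 * (5^1 * 7^3))" using assms(1) by simp
  then obtain a b where ab: "d = a * b" "a dvd 2^4" "b dvd 3^2 * (5^1 * 7^3)"
    using division_decomp by blast
  then obtain c e where ce: "b = c * e" "c dvd 3^2" "e dvd 5^1 * 7^3"
    using division_decomp by blast
  then obtain f g where fg: "e = f * g" "f dvd 5^1" "g dvd 7^3"
    using division_decomp by blast
  have "\<exists>i\<le>4. a = 2^i" using ab(2) divides_primepow_nat[of 2 a 4] by simp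
  then have A: "a = 1 \<or> a = 2 \<or> a = 4 \<or> a = 8 \<or> a = 16"
    by (auto simp: le_Suc_eq numeral_eq_Suc)
  have "\<exists>j\<le>2. c = 3^j" using ce(2) divides_primepow_nat[of 3 c 2] by simp
  then have C: "c = 1 \<or> c = 3 \<or> c = 9" by (auto simp: le_Suc_eq numeral_eq_Suc)
  have "\<exists>k\<le>1. f = 5^k" using fg(2) divides_primepow_nat[of 5 f 1] by simp
  then have F: "f = 1 \<or> f = 5" by (auto simp: le_Suc_eq)
  have "\<exists>l\<le>3. g = 7^l" using fg(3) divides_primepow_nat[of 7 g 3] by simp
  then have G: "g = 1 \<or> g = 7 \<or> g = 49 \<or> g = 343" by (auto simp: le_Suc_eq numeral_eq_Suc)
  have dd: "d = a * (c * (f * g))" using ab ce fg by simp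
  from A show False
  proof (elim disjE)
    assume ha: "a = 1"
    from C show False
    proof (elim disjE)
      assume hc: "c = 1"
      from F show False
      proof (elim disjE)
        assume hf: "f = 1"
        from G show False
        proof (elim disjE)
          assume hg: "g = 1"
          show False using bad dd ha hc hf hg nb_1 by simp
        next
          assume hg: "g = 7"
          show False using bad dd ha hc hf hg nb_7 by simp
        next
          assume hg: "g = 49"
          show False using bad dd ha hc hf hg nb_49 by simp
        next
          assume hg: "g = 343"
          show False using bad dd ha hc hf hg nb_343 by simp
        qed
      next
        assume hf: "f = 5"
        from G show False
        proof (elim disjE)
          assume hg: "g = 1"
          show False using bad dd ha hc hf hg nb_5 by simp
        next
          assume hg: "g = 7"
          show False using bad dd ha hc hf hg nb_35 by simp
        next
          assume hg: "g = 49"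
          show False using bad dd ha hc hf hg nb_245 by simp
        next
          assume hg: "g = 343"
          show False using bad dd ha hc hf hg nb_1715 by simp
        qed
      qed
    next
      assume hc: "c = 3"
      from F show False
      proof (elim disjE)
        assume hf: "f = 1"
        from G show False
        proof (elim disjE)
          assume hg: "g = 1"
          show False using bad dd ha hc hf hg nb_3 by simp
        next
          assume hg: "g = 7"
          show False using bad dd ha hc hf hg nb_21 by simp
        next
          assume hg: "g = 49"
          show False using bad dd ha hc hf hg nb_147 by simp
        next
          assume hg: "g = 343"
          show False using bad dd ha hc hf hg nb_1029 by simp
        qed
      next
        assume hf: "f = 5"
        from G show False
        proof (elim disjE)
          assume hg: "g = 1"
          show False using bad dd ha hc hf hg nb_15 by simp
        next
          assume hg: "g = 7"
          show False using bad dd ha hc hf hg nb_105 by simp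
        next
          assume hg: "g = 49"
          show False using bad dd ha hc hf hg nb_735 by simp
        next
          assume hg: "g = 343"
          show False using bad dd ha hc hf hg nb_5145 by simp
        qed
      qed
    next
      assume hc: "c = 9"
      from F show False
      proof (elim disjE)
        assume hf: "f = 1"
        from G show False
        proof (elim disjE)
          assume hg: "g = 1"
          show False using bad dd ha hc hf hg nb_9 by simp
        next
          assume hg: "g = 7"
          show False using bad dd ha hc hf hg nb_63 by simp
        next
          assume hg: "g = 49"
          show False using bad dd ha hc hf hg nb_441 by simp
        next
          assume hg: "g = 343"
          show False using bad dd ha hc hf hg nb_3087 by simp
        qed
      next
        assume hf: "f = 5"
        from G show False
        proof (elim disjE)
          assume hg: "g = 1"
          show False using bad dd ha hc hf hg nb_45 by simp
        next
          assume hg: "g = 7"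
          show False using bad dd ha hc hf hg nb_315 by simp
        next
          assume hg: "g = 49"
          show False using bad dd ha hc hf hg nb_2205 by simp
        next
          assume hg: "g = 343"
          show False using bad dd ha hc hf hg nb_15435 by simp
        qed
      qed
    qed
  next
    assume ha: "a = 2"
    from C show False
    proof (elim disjE)
      assume hc: "c = 1"
      from F show False
      proof (elim disjE)
        assume hf: "f = 1"
        from G show False
        proof (elim disjE)
          assume hg: "g = 1"
          show False using bad dd ha hc hf hg nb_2 by simp
        next
          assume hg: "g = 7"
          show False using bad dd ha hc hf hg nb_14 by simp
        next
          assume hg: "g = 49"
          show False using bad dd ha hc hf hg nb_98 by simp
        next
          assume hg: "g = 343"
          show False using bad dd ha hc hf hg nb_686 by simp
        qed
      next
        assume hf: "f = 5"
        from G show False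
        proof (elim disjE)
          assume hg: "g = 1"
          show False using bad dd ha hc hf hg nb_10 by simp
        next
          assume hg: "g = 7"
          show False using bad dd ha hc hf hg nb_70 by simp
        next
          assume hg: "g = 49"
          show False using bad dd ha hc hf hg nb_490 by simp
        next
          assume hg: "g = 343"
          show False using bad dd ha hc hf hg nb_3430 by simp
        qed
      qed
    next
      assume hc: "c = 3"
      from F show False
      proof (elim disjE)
        assume hf: "f = 1"
        from G show False
        proof (elim disjE)
          assume hg: "g = 1"
          show False using bad dd ha hc hf hg nb_6 by simp
        next
          assume hg: "g = 7"
          show False using bad dd ha hc hf hg nb_42 by simp
        next
          assume hg: "g = 49"
          show False using bad dd ha hc hf hg nb_294 by simp
        next
          assume hg: "g = 343"
          show False using bad dd ha hc hf hg nb_2058 by simp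
        qed
      next
        assume hf: "f = 5"
        from G show False
        proof (elim disjE)
          assume hg: "g = 1"
          show False using bad dd ha hc hf hg nb_30 by simp
        next
          assume hg: "g = 7"
          show False using bad dd ha hc hf hg nb_210 by simp
        next
          assume hg: "g = 49"
          show False using bad dd ha hc hf hg nb_1470 by simp
        next
          assume hg: "g = 343"
          show False using bad dd ha hc hf hg nb_10290 by simp
        qed
      qed
    next
      assume hc: "c = 9"
      from F show False
      proof (elim disjE)
        assume hf: "f = 1"
        from G show False
        proof (elim disjE)
          assume hg: "g = 1"
          show False using bad dd ha hc hf hg nb_18 by simp
        next
          assume hg: "g = 7"
          show False using bad dd ha hc hf hg nb_126 by simp
        next
          assume hg: "g = 49"
          show False using bad dd ha hc hf hg nb_882 by simp
        next
          assume hg: "g = 343"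
          show False using bad dd ha hc hf hg nb_6174 by simp
        qed
      next
        assume hf: "f = 5"
        from G show False
        proof (elim disjE)
          assume hg: "g = 1"
          show False using bad dd ha hc hf hg nb_90 by simp
        next
          assume hg: "g = 7"
          show False using bad dd ha hc hf hg nb_630 by simp
        next
          assume hg: "g = 49"
          show False using bad dd ha hc hf hg nb_4410 by simp
        next
          assume hg: "g = 343"
          show False using bad dd ha hc hf hg nb_30870 by simp
        qed
      qed
    qed
  next
    assume ha: "a = 4"
    from C show False
    proof (elim disjE)
      assume hc: "c = 1"
      from F show False
      proof (elim disjE)
        assume hf: "f = 1"
        from G show False
        proof (elim disjE)
          assume hg: "g = 1"
          show False using bad dd ha hc hf hg nb_4 by simp
        next
          assume hg: "g = 7"
          show False using bad dd ha hc hf hg nb_28 by simp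
        next
          assume hg: "g = 49"
          show False using bad dd ha hc hf hg nb_196 by simp
        next
          assume hg: "g = 343"
          show False using bad dd ha hc hf hg nb_1372 by simp
        qed
      next
        assume hf: "f = 5"
        from G show False
        proof (elim disjE)
          assume hg: "g = 1"
          show False using bad dd ha hc hf hg nb_20 by simp
        next
          assume hg: "g = 7"
          show False using bad dd ha hc hf hg nb_140 by simp
        next
          assume hg: "g = 49"
          show False using bad dd ha hc hf hg nb_980 by simp
        next
          assume hg: "g = 343"
          show False using bad dd ha hc hf hg nb_6860 by simp
        qed
      qed
    next
      assume hc: "c = 3"
      from F show False
      proof (elim disjE)
        assume hf: "f = 1"
        from G show False
        proof (elim disjE)
          assume hg: "g = 1"
          show False using bad dd ha hc hf hg nb_12 by simp
        next
          assume hg: "g = 7"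
          show False using bad dd ha hc hf hg nb_84 by simp
        next
          assume hg: "g = 49"
          show False using bad dd ha hc hf hg nb_588 by simp
        next
          assume hg: "g = 343"
          show False using bad dd ha hc hf hg nb_4116 by simp
        qed
      next
        assume hf: "f = 5"
        from G show False
        proof (elim disjE)
          assume hg: "g = 1"
          show False using bad dd ha hc hf hg nb_60 by simp
        next
          assume hg: "g = 7"
          show False using bad dd ha hc hf hg nb_420 by simp
        next
          assume hg: "g = 49"
          show False using bad dd ha hc hf hg nb_2940 by simp
        next
          assume hg: "g = 343"
          show False using bad dd ha hc hf hg nb_20580 by simp
        qed
      qed
    next
      assume hc: "c = 9"
      from F show False
      proof (elim disjE)
        assume hf: "f = 1"
        from G show False
        proof (elim disjE)
          assume hg: "g = 1"
          show False using bad dd ha hc hf hg nb_36 by simp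
        next
          assume hg: "g = 7"
          show False using bad dd ha hc hf hg nb_252 by simp
        next
          assume hg: "g = 49"
          show False using bad dd ha hc hf hg nb_1764 by simp
        next
          assume hg: "g = 343"
          show False using bad dd ha hc hf hg nb_12348 by simp
        qed
      next
        assume hf: "f = 5"
        from G show False
        proof (elim disjE)
          assume hg: "g = 1"
          show False using bad dd ha hc hf hg nb_180 by simp
        next
          assume hg: "g = 7"
          show False using bad dd ha hc hf hg nb_1260 by simp
        next
          assume hg: "g = 49"
          show False using bad dd ha hc hf hg nb_8820 by simp
        next
          assume hg: "g = 343"
          show False using bad dd ha hc hf hg nb_61740 by simp
        qed
      qed
    qed
  next
    assume ha: "a = 8"
    from C show False
    proof (elim disjE)
      assume hc: "c = 1"
      from F show False
      proof (elim disjE)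
        assume hf: "f = 1"
        from G show False
        proof (elim disjE)
          assume hg: "g = 1"
          show False using bad dd ha hc hf hg nb_8 by simp
        next
          assume hg: "g = 7"
          show False using bad dd ha hc hf hg nb_56 by simp
        next
          assume hg: "g = 49"
          show False using bad dd ha hc hf hg nb_392 by simp
        next
          assume hg: "g = 343"
          show False using bad dd ha hc hf hg nb_2744 by simp
        qed
      next
        assume hf: "f = 5"
        from G show False
        proof (elim disjE)
          assume hg: "g = 1"
          show False using bad dd ha hc hf hg nb_40 by simp
        next
          assume hg: "g = 7"
          show False using bad dd ha hc hf hg nb_280 by simp
        next
          assume hg: "g = 49"
          show False using bad dd ha hc hf hg nb_1960 by simp
        next
          assume hg: "g = 343"
          show False using bad dd ha hc hf hg nb_13720 by simp
        qed
      qed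
    next
      assume hc: "c = 3"
      from F show False
      proof (elim disjE)
        assume hf: "f = 1"
        from G show False
        proof (elim disjE)
          assume hg: "g = 1"
          show False using bad dd ha hc hf hg nb_24 by simp
        next
          assume hg: "g = 7"
          show False using bad dd ha hc hf hg nb_168 by simp
        next
          assume hg: "g = 49"
          show False using bad dd ha hc hf hg nb_1176 by simp
        next
          assume hg: "g = 343"
          show False using bad dd ha hc hf hg nb_8232 by simp
        qed
      next
        assume hf: "f = 5"
        from G show False
        proof (elim disjE)
          assume hg: "g = 1"
          show False using bad dd ha hc hf hg nb_120 by simp
        next
          assume hg: "g = 7"
          show False using bad dd ha hc hf hg nb_840 by simp
        next
          assume hg: "g = 49"
          show False using bad dd ha hc hf hg nb_5880 by simp
        next
          assume hg: "g = 343"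
          show False using bad dd ha hc hf hg nb_41160 by simp
        qed
      qed
    next
      assume hc: "c = 9"
      from F show False
      proof (elim disjE)
        assume hf: "f = 1"
        from G show False
        proof (elim disjE)
          assume hg: "g = 1"
          show False using bad dd ha hc hf hg nb_72 by simp
        next
          assume hg: "g = 7"
          show False using bad dd ha hc hf hg nb_504 by simp
        next
          assume hg: "g = 49"
          show False using bad dd ha hc hf hg nb_3528 by simp
        next
          assume hg: "g = 343"
          show False using bad dd ha hc hf hg nb_24696 by simp
        qed
      next
        assume hf: "f = 5"
        from G show False
        proof (elim disjE)
          assume hg: "g = 1"
          show False using bad dd ha hc hf hg nb_360 by simp
        next
          assume hg: "g = 7"
          show False using bad dd ha hc hf hg nb_2520 by simp
        next
          assume hg: "g = 49"
          show False using bad dd ha hc hf hg nb_17640 by simp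
        next
          assume hg: "g = 343"
          show False using bad dd ha hc hf hg nb_123480 by simp
        qed
      qed
    qed
  next
    assume ha: "a = 16"
    from C show False
    proof (elim disjE)
      assume hc: "c = 1"
      from F show False
      proof (elim disjE)
        assume hf: "f = 1"
        from G show False
        proof (elim disjE)
          assume hg: "g = 1"
          show False using bad dd ha hc hf hg nb_16 by simp
        next
          assume hg: "g = 7"
          show False using bad dd ha hc hf hg nb_112 by simp
        next
          assume hg: "g = 49"
          show False using bad dd ha hc hf hg nb_784 by simp
        next
          assume hg: "g = 343"
          show False using bad dd ha hc hf hg nb_5488 by simp
        qed
      next
        assume hf: "f = 5"
        from G show False
        proof (elim disjE)
          assume hg: "g = 1"
          show False using bad dd ha hc hf hg nb_80 by simp
        next
          assume hg: "g = 7"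
          show False using bad dd ha hc hf hg nb_560 by simp
        next
          assume hg: "g = 49"
          show False using bad dd ha hc hf hg nb_3920 by simp
        next
          assume hg: "g = 343"
          show False using bad dd ha hc hf hg nb_27440 by simp
        qed
      qed
    next
      assume hc: "c = 3"
      from F show False
      proof (elim disjE)
        assume hf: "f = 1"
        from G show False
        proof (elim disjE)
          assume hg: "g = 1"
          show False using bad dd ha hc hf hg nb_48 by simp
        next
          assume hg: "g = 7"
          show False using bad dd ha hc hf hg nb_336 by simp
        next
          assume hg: "g = 49"
          show False using bad dd ha hc hf hg nb_2352 by simp
        next
          assume hg: "g = 343"
          show False using bad dd ha hc hf hg nb_16464 by simp
        qed
      next
        assume hf: "f = 5"
        from G show False
        proof (elim disjE)
          assume hg: "g = 1"
          show False using bad dd ha hc hf hg nb_240 by simp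
        next
          assume hg: "g = 7"
          show False using bad dd ha hc hf hg nb_1680 by simp
        next
          assume hg: "g = 49"
          show False using bad dd ha hc hf hg nb_11760 by simp
        next
          assume hg: "g = 343"
          show False using bad dd ha hc hf hg nb_82320 by simp
        qed
      qed
    next
      assume hc: "c = 9"
      from F show False
      proof (elim disjE)
        assume hf: "f = 1"
        from G show False
        proof (elim disjE)
          assume hg: "g = 1"
          show False using bad dd ha hc hf hg nb_144 by simp
        next
          assume hg: "g = 7"
          show False using bad dd ha hc hf hg nb_1008 by simp
        next
          assume hg: "g = 49"
          show False using bad dd ha hc hf hg nb_7056 by simp
        next
          assume hg: "g = 343"
          show False using bad dd ha hc hf hg nb_49392 by simp
        qed
      next
        assume hf: "f = 5"
        from G show False
        proof (elim disjE)
          assume hg: "g = 1"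
          show False using bad dd ha hc hf hg nb_720 by simp
        next
          assume hg: "g = 7"
          show False using bad dd ha hc hf hg nb_5040 by simp
        next
          assume hg: "g = 49"
          show False using bad dd ha hc hf hg nb_35280 by simp
        next
          assume hg: "g = 343"
          show False using bad dd ha hc hf hg nb_246960 by simp
        qed
      qed
    qed
  qed
qed

lemma nt_main:
  fixes n e :: int
  assumes n3: "3 \<le> n" and C1: "252 dvd (n+1)*(n+2)*(n+5)*(n+6)"
    and E: "(n+5)*(n+8)*(38*n^4+128*n^3-278*n^2+2896*n-2784)^2 = 28*2016^2*(n-2)^2*e^2"
  shows False
proof -
  define Q where "Q = 38*n^4+128*n^3-278*n^2+2896*n-2784"
  have n2: "9 \<le> n^2" using n3 power_mono[of 3 n 2] by simp
  have a1: "0 \<le> n^2 * (38*n^2 - 278)" using n2 by simp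
  have a2: "0 < 2896*n - 2784" using n3 by simp
  have a3: "0 \<le> 128*n^3" using n3 by simp
  have "Q = n^2 * (38*n^2 - 278) + 128*n^3 + (2896*n - 2784)"
    unfolding Q_def by (simp add: algebra_simps power2_eq_square power4_eq_xxxx)
  then have Qpos: "Q > 0" using a1 a2 a3 by linarith
  have E2: "7*(n+5)*(n+8) * Q^2 = (14*2016*(n-2)*e)^2"
  proof -
    have "(14*2016*(n-2)*e)^2 = 7*(28*2016^2*(n-2)^2*e^2)" unfolding power2_eq_square by (simp add: algebra_simps)
    also have "\<dots> = 7*((n+5)*(n+8)*Q^2)" using E unfolding Q_def by simp
    finally show ?thesis by (simp add: mult.assoc)
  qed
  then have "is_nth_power 2 (7*(n+5)*(n+8) * Q^2)" by (metis is_nth_powerI)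
  hence "is_nth_power 2 (7*(n+5)*(n+8))"
    using is_nth_power_mult_cancel_right[of 2 "Q^2" "7*(n+5)*(n+8)"] Qpos by auto
  then obtain s where s: "7*(n+5)*(n+8) = s^2" by (auto elim: is_nth_powerE)
  have "(s*Q)^2 = (14*2016*(n-2)*e)^2" using E2 s by (simp add: power_mult_distrib)
  then have sq: "s*Q = 14*2016*(n-2)*e \<or> s*Q = -(14*2016*(n-2)*e)"
    using power2_eq_iff by blast
  define p where "p = (n+5)*(n+8)*Q"
  have "7*p = (7*(n+5)*(n+8))*Q" unfolding p_def by (simp add: algebra_simps)
  also have "\<dots> = s*(s*Q)" using s by (simp add: power2_eq_square)
  finally have "7*p = s*(s*Q)" .
  note sp = this
  have "p = 4032* s*(n-2)*e \<or> p = -(4032* s*(n-2)*e)"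
  proof (rule disjE[OF sq])
    assume h: "s*Q = 14*2016*(n-2)*e"
    have "7*p = s*(14*2016*(n-2)*e)" using sp h by simp
    also have "\<dots> = 7*(4032* s*(n-2)*e)" by (simp add: algebra_simps)
    finally show ?thesis by simp
  next
    assume h: "s*Q = -(14*2016*(n-2)*e)"
    have "7*p = s*(-(14*2016*(n-2)*e))" using sp h by simp
    also have "\<dots> = 7*(-(4032* s*(n-2)*e))" by (simp add: algebra_simps)
    finally show ?thesis by simp
  qed
  then have dp: "(n-2) dvd p" by auto
  have "p = (n-2)*(38*n^5 + 698*n^4 + 4302*n^3 + 13006*n^2 + 49756*n + 179160) + 246960"
    unfolding p_def Q_def by (simp add: algebra_simps eval_nat_numeral)
  then have "(n-2) dvd 246960" using dp by (metis dvd_add_right_iff dvd_triv_left)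
  define d where "d = nat (n-2)"
  have nd: "n = int d + 2" using n3 unfolding d_def by simp
  have "int d dvd int 246960" using \<open>(n-2) dvd 246960\<close> nd by simp
  then have dd: "d dvd 246960" by (simp only: of_nat_dvd_iff)
  have c1: "(252::int) dvd (int d+3)*(int d+4)*(int d+7)*(int d+8)"
    using C1 nd by (simp add: algebra_simps)
  have "s^2 = 7*(int d+7)*(int d+10)" using s nd by (simp add: algebra_simps)
  then show False using nt_cases[OF dd c1] by blast
qed


theorem theorem6p5:
  assumes "CARD('n::finite) \<ge> 2"
  shows "\<not> (\<exists>Y :: (real^'n) set. harmonic_index_design {8, 4} Y \<and>
            real (card Y) = (real CARD('n) + 1) * (real CARD('n) + 2) *
                            (real CARD('n) + 5) * (real CARD('n) + 6) / 252)"
proof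
  assume "\<exists>Y :: (real^'n) set. harmonic_index_design {8, 4} Y \<and>
            real (card Y) = (real CARD('n) + 1) * (real CARD('n) + 2) *
                            (real CARD('n) + 5) * (real CARD('n) + 6) / 252"
  then obtain Y :: "(real^'n) set" where des: "harmonic_index_design {8, 4} Y"
    and cY: "real (card Y) = (real CARD('n) + 1) * (real CARD('n) + 2) *
                            (real CARD('n) + 5) * (real CARD('n) + 6) / 252" by blast
  define nn where "nn = real CARD('n)"
  have nn0: "nn \<ge> 0" unfolding nn_def by simp
  have fin: "finite Y" and sph: "Y \<subseteq> sphere 0 1"
    and hz: "\<forall>k\<in>{8,4}. \<forall>c. harmonic_hpoly k c \<longrightarrow> (\<Sum>x\<in>Y. hpoly_eval k c x) = 0"
    using des unfolding harmonic_index_design_def by auto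
  have hz4: "(\<Sum>x\<in>Y. hpoly_eval 4 c x) = 0" if "harmonic_hpoly 4 c" for c
    using hz that by auto
  have hz8: "(\<Sum>x\<in>Y. hpoly_eval 8 c x) = 0" if "harmonic_hpoly 8 c" for c
    using hz that by auto
  have "0 < (real CARD('n) + 1) * (real CARD('n) + 2) * (real CARD('n) + 5) * (real CARD('n) + 6) / 252"
    by (intro divide_pos_pos mult_pos_pos) auto
  then have "0 < real (card Y)" using cY by linarith
  then have "card Y > 0" by simp
  then have "Y \<noteq> {}" by auto
  then obtain x0 where x0: "x0 \<in> Y" by blast
  have x0u: "(\<Sum>i\<in>UNIV. x0$i * x0$i) = 1" using sph x0 by (intro sphere_sq) auto
  have r1: "(\<Sum>i\<in>UNIV. x$i * x$i) = 1" if "x \<in> Y" for x :: "real^'n" using sph that by (intro sphere_sq) auto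
  define t where "t x = (\<Sum>i\<in>UNIV. x0$i * x$i)" for x
  have t0: "t x0 = 1" unfolding t_def using x0u .
  note A4 = hz4[OF zonal4(1)[OF x0u]]
  note A8 = hz8[OF zonal8(1)[OF x0u]]
  have S4: "(\<Sum>x\<in>Y. t x^4 + (-6/(nn+4)) * t x^2 + 3/((nn+2)*(nn+4))) = 0"
  proof -
    have "(\<Sum>x\<in>Y. t x^4 + (-6/(nn+4)) * t x^2 + 3/((nn+2)*(nn+4)))
      = (\<Sum>x\<in>Y. hpoly_eval 4 (\<lambda>\<alpha>. MM x0 4 0 \<alpha> + (-6/(real CARD('n)+4)) * MM x0 2 1 \<alpha>
            + (3/((real CARD('n)+2)*(real CARD('n)+4))) * MM x0 0 2 \<alpha>) x)"
    proof (intro sum.cong refl)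
      fix x assume "x \<in> Y"
      then show "t x^4 + (-6/(nn+4)) * t x^2 + 3/((nn+2)*(nn+4)) = hpoly_eval 4 (\<lambda>\<alpha>. MM x0 4 0 \<alpha> + (-6/(real CARD('n)+4)) * MM x0 2 1 \<alpha>
            + (3/((real CARD('n)+2)*(real CARD('n)+4))) * MM x0 0 2 \<alpha>) x"
        by (simp only: zonal4(2)[OF x0u] r1 mult_1_right power_one t_def nn_def)
    qed
    then show ?thesis using A4 by simp
  qed
  have S8: "(\<Sum>x\<in>Y. t x^8 + (-28/(nn+12)) * t x^6 + (210/((nn+10)*(nn+12))) * t x^4
                 + (-420/((nn+8)*(nn+10)*(nn+12))) * t x^2 + 105/((nn+6)*(nn+8)*(nn+10)*(nn+12))) = 0"
  proof -
    have "(\<Sum>x\<in>Y. t x^8 + (-28/(nn+12)) * t x^6 + (210/((nn+10)*(nn+12))) * t x^4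
                 + (-420/((nn+8)*(nn+10)*(nn+12))) * t x^2 + 105/((nn+6)*(nn+8)*(nn+10)*(nn+12)))
      = (\<Sum>x\<in>Y. hpoly_eval 8 (\<lambda>\<alpha>. MM x0 8 0 \<alpha> + (-28/(real CARD('n)+12)) * MM x0 6 1 \<alpha>
           + (210/((real CARD('n)+10)*(real CARD('n)+12))) * MM x0 4 2 \<alpha>
           + (-420/((real CARD('n)+8)*(real CARD('n)+10)*(real CARD('n)+12))) * MM x0 2 3 \<alpha>
           + (105/((real CARD('n)+6)*(real CARD('n)+8)*(real CARD('n)+10)*(real CARD('n)+12))) * MM x0 0 4 \<alpha>) x)"
    proof (intro sum.cong refl)
      fix x assume "x \<in> Y"
      then show "t x^8 + (-28/(nn+12)) * t x^6 + (210/((nn+10)*(nn+12))) * t x^4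
                 + (-420/((nn+8)*(nn+10)*(nn+12))) * t x^2 + 105/((nn+6)*(nn+8)*(nn+10)*(nn+12))
         = hpoly_eval 8 (\<lambda>\<alpha>. MM x0 8 0 \<alpha> + (-28/(real CARD('n)+12)) * MM x0 6 1 \<alpha>
           + (210/((real CARD('n)+10)*(real CARD('n)+12))) * MM x0 4 2 \<alpha>
           + (-420/((real CARD('n)+8)*(real CARD('n)+10)*(real CARD('n)+12))) * MM x0 2 3 \<alpha>
           + (105/((real CARD('n)+6)*(real CARD('n)+8)*(real CARD('n)+10)*(real CARD('n)+12))) * MM x0 0 4 \<alpha>) x"
        by (simp only: zonal8(2)[OF x0u] r1 mult_1_right power_one t_def nn_def)
    qed
    then show ?thesis using A8 by simp
  qed
  have cY': "real (card Y) = (nn+1)*(nn+2)*(nn+5)*(nn+6)/252" using cY unfolding nn_def .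
  obtain e :: int where E: "(nn+5)*(nn+8)*(38*nn^4+128*nn^3-278*nn^2+2896*nn-2784)^2 = 28*2016^2*(nn-2)^2*(real_of_int e)^2"
    using main_alg[OF fin x0 t0 nn0 cY' S4 S8] by blast
  define n where "n = int CARD('n)"
  have nnn: "nn = real_of_int n" unfolding nn_def n_def by simp
  have C: "real (card Y) * 252 = (nn+1)*(nn+2)*(nn+5)*(nn+6)" using cY' by simp
  show False
  proof (cases "CARD('n) = 2")
    case True
    then have "real (card Y) * 252 = 672" using C unfolding nn_def by simp
    then have "card Y * 252 = 672" by (metis of_nat_eq_iff of_nat_mult of_nat_numeral)
    then show False by presburger
  next
    case False
    then have n3: "3 \<le> n" using assms unfolding n_def by simp
    have "real_of_int (int (card Y) * 252) = real_of_int ((n+1)*(n+2)*(n+5)*(n+6))"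
      using C unfolding nnn by simp
    then have "int (card Y) * 252 = (n+1)*(n+2)*(n+5)*(n+6)" by (simp only: of_int_eq_iff)
    then have dv: "252 dvd (n+1)*(n+2)*(n+5)*(n+6)" by (metis dvd_triv_right)
    have "real_of_int ((n+5)*(n+8)*(38*n^4+128*n^3-278*n^2+2896*n-2784)^2) = real_of_int (28*2016^2*(n-2)^2*e^2)"
      using E unfolding nnn by simp
    then have "(n+5)*(n+8)*(38*n^4+128*n^3-278*n^2+2896*n-2784)^2 = 28*2016^2*(n-2)^2*e^2"
      by (simp only: of_int_eq_iff)
    then show False using nt_main[OF n3 dv] by blast
  qed
qed


end
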